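(* Let $m\in A_n$ be a monomial with $\mathrm{mdeg}(m)=(\alpha,\beta)$. Then: (i) $g_+(m)$ and $g_-(m)$ commute if and only if $\alpha=\beta$; (ii) if $g_+(m)$ and $g_-(m)$ do not commute, then $\deg([g_+(m),g_-(m)])=\deg(g_+(m))+\deg(g_-(m))-2=:d$; (iii) in that case $$\deg\Big([g_+(m),g_-(m)]+2i\sum_{k=1}^n(\alpha_k^2-\beta_k^2)\,a^{(\alpha+\beta-e_k,\;\alpha+\beta-e_k)}\Big)<d,$$ where the summands with $\alpha_k+\beta_k=0$ vanish.
   Context: Fix $n\ge 1$. The Weyl algebra $A_n$ is the unital associative $\mathbb{C}$-algebra generated by $a_1,\dots,a_n,a_1^\dagger,\dots,a_n^\dagger$ subject to $[a_i,a_j^\dagger]=\delta_{ij}$ and $[a_i,a_j]=[a_i^\dagger,a_j^\dagger]=0$. For $\gamma=(\alpha,\beta)\in\mathbb N_0^{2n}$ set $a^{\gamma}=(a_1^\dagger)^{\alpha_1}\cdots(a_n^\dagger)^{\alpha_n}a_1^{\beta_1}\cdots a_n^{\beta_n}$; these form a $\mathbb C$-basis of $A_n$; $|\gamma|=\sum_j\alpha_j+\sum_j\beta_j$. For $0\neq g\in A_n$, $\deg(g)$ is the largest $|\gamma|$ such that $a^\gamma$ has nonzero coefficient in the expansion of $g$; $\deg(0)=-\infty$. A monomial is a finite product (in any order) of the generators $a_j,a_j^\dagger$; its multi-degree $\mathrm{mdeg}(m)=(\alpha,\beta)$ records the number $\alpha_j$ of factors $a_j^\dagger$ and $\beta_j$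 of factors $a_j$. The adjoint $\dagger$ is the conjugate-linear anti-automorphism with $(a_j)^\dagger=a_j^\dagger$, $(a_j^\dagger)^\dagger=a_j$, $1^\dagger=1$. $g_+(m)=i(m^\dagger+m)$, $g_-(m)=m^\dagger-m$. $e_k\in\mathbb N_0^n$ denotes the $k$-th unit vector. *)

theory Defs
  imports Complex_Main "HOL-Library.Function_Algebras" "HOL-Library.Extended_Real"
begin

text \<open>The Weyl algebra A_n is modelled by its normal-ordered basis: an element is a
  function from multi-indices (alpha, beta) to coefficients (finitely supported,
  alpha j = beta j = 0 for j >= n); the function value at (alpha,beta) is the
  coefficient of the basis element (a^dagger)^alpha a^beta.  Modes are indexed
  0..n-1 (paper: 1..n).\<close>

type_synonym midx = "(nat \<Rightarrow> nat) \<times> (nat \<Rightarrow> nat)"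
type_synonym weyl = "midx \<Rightarrow> complex"

datatype gen = Cre nat | Ann nat

fun gidx :: "gen \<Rightarrow> nat" where
  "gidx (Cre j) = j" | "gidx (Ann j) = j"

fun gdag :: "gen \<Rightarrow> gen" where
  "gdag (Cre j) = Ann j" | "gdag (Ann j) = Cre j"

definition basis :: "midx \<Rightarrow> weyl" where
  "basis \<gamma> = (\<lambda>\<delta>. if \<delta> = \<gamma> then 1 else 0)"

text \<open>Left multiplication by a generator, derived from the defining relations:
  a_j^dagger a^(alpha,beta) = a^(alpha+e_j,beta),
  a_j a^(alpha,beta) = a^(alpha,beta+e_j) + alpha_j a^(alpha-e_j,beta).\<close>
fun lmul :: "gen \<Rightarrow> weyl \<Rightarrow> weyl" where
  "lmul (Cre j) g = (\<lambda>(\<alpha>, \<beta>). if \<alpha> j > 0 then g (\<alpha>(j := \<alpha> j - 1), \<beta>) else 0)"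
| "lmul (Ann j) g = (\<lambda>(\<alpha>, \<beta>).
      (if \<beta> j > 0 then g (\<alpha>, \<beta>(j := \<beta> j - 1)) else 0)
      + of_nat (\<alpha> j + 1) * g (\<alpha>(j := \<alpha> j + 1), \<beta>))"

fun act :: "gen list \<Rightarrow> weyl \<Rightarrow> weyl" where
  "act [] g = g"
| "act (x # xs) g = lmul x (act xs g)"

definition mon :: "gen list \<Rightarrow> weyl" where
  "mon w = act w (basis (\<lambda>_. 0, \<lambda>_. 0))"

definition word :: "nat \<Rightarrow> midx \<Rightarrow> gen list" where
  "word n \<gamma> = concat (map (\<lambda>j. replicate (fst \<gamma> j) (Cre j)) [0..<n])
             @ concat (map (\<lambda>j. replicate (snd \<gamma> j) (Ann j)) [0..<n])"

definition wmul :: "nat \<Rightarrow> weyl \<Rightarrow> weyl \<Rightarrow> weyl" where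
  "wmul n f g = (\<Sum>\<gamma>\<in>{\<gamma>. f \<gamma> \<noteq> 0}. (\<lambda>\<delta>. f \<gamma> * act (word n \<gamma>) g \<delta>))"

definition comm :: "nat \<Rightarrow> weyl \<Rightarrow> weyl \<Rightarrow> weyl" where
  "comm n f g = wmul n f g - wmul n g f"

definition mlen :: "nat \<Rightarrow> midx \<Rightarrow> nat" where
  "mlen n \<gamma> = (\<Sum>j<n. fst \<gamma> j) + (\<Sum>j<n. snd \<gamma> j)"

definition wdeg :: "nat \<Rightarrow> weyl \<Rightarrow> ereal" where
  "wdeg n g = (if g = 0 then -\<infinity> else ereal (real (Max {mlen n \<gamma> | \<gamma>. g \<gamma> \<noteq> 0})))"

definition mdeg :: "gen list \<Rightarrow> midx" where
  "mdeg w = (\<lambda>j. count_list w (Cre j), \<lambda>j. count_list w (Ann j))"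

definition mon_adj :: "gen list \<Rightarrow> weyl" where
  "mon_adj w = mon (rev (map gdag w))"

definition g_plus :: "gen list \<Rightarrow> weyl" where
  "g_plus w = (\<lambda>\<gamma>. \<i> * (mon_adj w \<gamma> + mon w \<gamma>))"

definition g_minus :: "gen list \<Rightarrow> weyl" where
  "g_minus w = (\<lambda>\<gamma>. mon_adj w \<gamma> - mon w \<gamma>)"

end

theory Submission
  imports Defs
begin


definition sm :: "complex \<Rightarrow> weyl \<Rightarrow> weyl" where "sm c f = (\<lambda>\<gamma>. c * f \<gamma>)"

lemma sm_apply[simp]: "sm c f \<gamma> = c * f \<gamma>" by (simp add: sm_def)

lemma sum_fun_apply: "(\<Sum>i\<in>I. F i) x = (\<Sum>i\<in>I. F i x)"
  by (induction I rule: infinite_finite_induct) auto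

lemma lmul_add: "lmul x (f + g) = lmul x f + lmul x g"
  by (cases x) (auto simp: fun_eq_iff algebra_simps)

lemma lmul_diff: "lmul x (f - g) = lmul x f - lmul x g"
  by (cases x) (auto simp: fun_eq_iff algebra_simps)

lemma lmul_sm: "lmul x (sm c f) = sm c (lmul x f)"
  by (cases x) (auto simp: fun_eq_iff algebra_simps)

lemma lmul_zero: "lmul x 0 = 0"
  by (cases x) (auto simp: fun_eq_iff)

lemma lmul_sum: "lmul x (\<Sum>i\<in>I. F i) = (\<Sum>i\<in>I. lmul x (F i))"
proof (induction I rule: infinite_finite_induct)
  case (infinite A) thus ?case by (simp only: sum.infinite[OF infinite] lmul_zero)
next
  case empty thus ?case by (simp only: sum.empty lmul_zero)
next
  case (insert y A) thus ?case by (simp only: sum.insert[OF insert(1,2)] lmul_add insert(3))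
qed

lemma act_add: "act u (f + g) = act u f + act u g"
  by (induction u) (simp_all only: act.simps lmul_add)
lemma act_diff: "act u (f - g) = act u f - act u g"
  by (induction u) (simp_all only: act.simps lmul_diff)
lemma act_sm: "act u (sm c f) = sm c (act u f)"
  by (induction u) (simp_all only: act.simps lmul_sm)
lemma act_zero: "act u 0 = 0"
  by (induction u) (simp_all only: act.simps lmul_zero)
lemma act_sum: "act u (\<Sum>i\<in>I. F i) = (\<Sum>i\<in>I. act u (F i))"
proof (induction I rule: infinite_finite_induct)
  case (infinite A) thus ?case by (simp only: sum.infinite[OF infinite] act_zero)
next
  case empty thus ?case by (simp only: sum.empty act_zero)
next
  case (insert y A) thus ?case by (simp only: sum.insert[OF insert(1,2)] act_add insert(3))
qed
lemma act_append: "act (u @ v) g = act u (act v g)"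
  by (induction u) auto

fun eps :: "gen \<Rightarrow> gen \<Rightarrow> complex" where
  "eps (Ann j) (Cre k) = (if j = k then 1 else 0)"
| "eps (Cre j) (Ann k) = (if j = k then -1 else 0)"
| "eps _ _ = 0"

lemma comm_CC: "lmul (Cre j) (lmul (Cre k) g) = lmul (Cre k) (lmul (Cre j) g)"
  by (cases "j = k") (auto simp: fun_eq_iff fun_upd_twist)

lemma comm_AA: "lmul (Ann j) (lmul (Ann k) g) = lmul (Ann k) (lmul (Ann j) g)"
  by (cases "j = k") (auto simp: fun_eq_iff fun_upd_twist algebra_simps)

lemma comm_AC: "lmul (Ann j) (lmul (Cre k) g) = lmul (Cre k) (lmul (Ann j) g) + (if j = k then g else 0)"
  by (cases "j = k") (auto simp: fun_eq_iff fun_upd_twist algebra_simps)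

lemma sm0[simp]: "sm 0 g = 0" by (simp add: fun_eq_iff)
lemma sm1[simp]: "sm 1 g = g" by (simp add: fun_eq_iff)

lemma comm_eps: "lmul x (lmul y g) = lmul y (lmul x g) + sm (eps x y) g"
proof (cases x; cases y)
  fix j k assume "x = Cre j" "y = Cre k" thus ?thesis using comm_CC[of j k g] by (simp del: lmul.simps)
next
  fix j k assume "x = Ann j" "y = Ann k" thus ?thesis using comm_AA[of j k g] by (simp del: lmul.simps)
next
  fix j k assume "x = Ann j" "y = Cre k" thus ?thesis
    using comm_AC[of j k g] by (cases "j = k") (simp_all del: lmul.simps)
next
  fix j k assume "x = Cre j" "y = Ann k" thus ?thesis
    using comm_AC[of k j g] by (cases "j = k") (simp_all del: lmul.simps add: fun_eq_iff)
qed

lemma E1: "act (x # v) g - act (v @ [x]) g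
   = (\<Sum>j<length v. sm (eps x (v!j)) (act (take j v @ drop (Suc j) v) g))"
proof (induction v)
  case Nil thus ?case by simp
next
  case (Cons y v)
  have "act (x # y # v) g - act ((y # v) @ [x]) g
      = lmul x (lmul y (act v g)) - lmul y (act (v @ [x]) g)" by simp
  also have "\<dots> = lmul y (act (x # v) g - act (v @ [x]) g) + sm (eps x y) (act v g)"
    using comm_eps[of x y "act v g"] by (simp add: lmul_diff algebra_simps)
  also have "\<dots> = (\<Sum>j<length v. lmul y (sm (eps x (v!j)) (act (take j v @ drop (Suc j) v) g)))
          + sm (eps x y) (act v g)"
    by (simp only: Cons lmul_sum)
  also have "\<dots> = (\<Sum>j<length (y # v). sm (eps x ((y # v)!j)) (act (take j (y # v) @ drop (Suc j) (y # v)) g))"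
    unfolding length_Cons sum.lessThan_Suc_shift by (simp add: lmul_sm add.commute)
  finally show ?case .
qed

lemma E: "act (u @ v) g - act (v @ u) g
   = (\<Sum>i<length u. \<Sum>j<length v. sm (eps (u!i) (v!j))
        (act (take i u @ take j v @ drop (Suc j) v @ drop (Suc i) u) g))"
proof (induction u)
  case Nil thus ?case by simp
next
  case (Cons x u)
  have "act ((x # u) @ v) g - act (v @ x # u) g
     = lmul x (act (u @ v) g - act (v @ u) g) + (act (x # v) (act u g) - act (v @ [x]) (act u g))"
    by (simp add: act_append lmul_diff)
  also have "\<dots> = (\<Sum>i<length u. \<Sum>j<length v. sm (eps (u!i) (v!j))
        (act (x # take i u @ take j v @ drop (Suc j) v @ drop (Suc i) u) g))
      + (\<Sum>j<length v. sm (eps x (v!j)) (act (take j v @ drop (Suc j) v) (act u g)))"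
    by (simp only: Cons E1 lmul_sum lmul_sm act.simps(2)[symmetric] append_Cons)
  also have "\<dots> = (\<Sum>i<length (x # u). \<Sum>j<length v. sm (eps ((x # u)!i) (v!j))
        (act (take i (x # u) @ take j v @ drop (Suc j) v @ drop (Suc i) (x # u)) g))"
    unfolding length_Cons sum.lessThan_Suc_shift by (simp add: act_append[symmetric] add.commute)
  finally show ?case .
qed



definition modes :: "nat \<Rightarrow> midx \<Rightarrow> bool" where
  "modes n \<gamma> \<longleftrightarrow> (\<forall>j\<ge>n. fst \<gamma> j = 0 \<and> snd \<gamma> j = 0)"

definition okw :: "nat \<Rightarrow> gen list \<Rightarrow> bool" where
  "okw n u \<longleftrightarrow> (\<forall>x\<in>set u. gidx x < n)"

lemma sum_upd_nat: "(\<Sum>i<(n::nat). (f(j:=v)) i) + (if j<n then f j else 0) = (\<Sum>i<n. f i) + (if j<n then v else (0::nat))"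
proof (cases "j < n")
  case True
  have "(\<Sum>i<n. (f(j:=v)) i) = (f(j:=v)) j + (\<Sum>i\<in>{..<n}-{j}. (f(j:=v)) i)"
    using True by (intro sum.remove) auto
  also have "(\<Sum>i\<in>{..<n}-{j}. (f(j:=v)) i) = (\<Sum>i\<in>{..<n}-{j}. f i)"
    by (intro sum.cong) auto
  finally have "(\<Sum>i<n. (f(j:=v)) i) = v + (\<Sum>i\<in>{..<n}-{j}. f i)" by simp
  moreover have "(\<Sum>i<n. f i) = f j + (\<Sum>i\<in>{..<n}-{j}. f i)"
    using True by (intro sum.remove) auto
  ultimately show ?thesis using True by simp
next
  case False
  have "(\<Sum>i<n. (f(j:=v)) i) = (\<Sum>i<n. f i)" using False by (intro sum.cong) auto
  thus ?thesis using False by simp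
qed

lemma mlen_upd1: "mlen n (a(j:=v), b) + (if j<n then a j else 0) = mlen n (a,b) + (if j<n then v else 0)"
  unfolding mlen_def using sum_upd_nat[where n=n and f=a and j=j and v=v] by simp

lemma mlen_upd2: "mlen n (a, b(j:=v)) + (if j<n then b j else 0) = mlen n (a,b) + (if j<n then v else 0)"
  unfolding mlen_def using sum_upd_nat[where n=n and f=b and j=j and v=v] by simp

lemma mdeg_Nil: "mdeg [] = (\<lambda>_. 0, \<lambda>_. 0)" by (simp add: mdeg_def)

lemma mdeg_Cre: "mdeg (Cre j # u) = ((fst (mdeg u))(j := Suc (fst (mdeg u) j)), snd (mdeg u))"
  by (auto simp: mdeg_def fun_eq_iff)
lemma mdeg_Ann: "mdeg (Ann j # u) = (fst (mdeg u), (snd (mdeg u))(j := Suc (snd (mdeg u) j)))"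
  by (auto simp: mdeg_def fun_eq_iff)

lemma mlen_mdeg: "okw n u \<Longrightarrow> mlen n (mdeg u) = length u"
proof (induction u)
  case Nil thus ?case by (simp add: mdeg_Nil mlen_def)
next
  case (Cons x u)
  hence IH: "mlen n (mdeg u) = length u" and xn: "gidx x < n" by (auto simp: okw_def)
  show ?case
  proof (cases x)
    case (Cre j)
    with xn have "j < n" by simp
    thus ?thesis using mlen_upd1[of n "fst (mdeg u)" j "Suc (fst (mdeg u) j)" "snd (mdeg u)"] IH
      by (simp add: Cre mdeg_Cre)
  next
    case (Ann j)
    with xn have "j < n" by simp
    thus ?thesis using mlen_upd2[of n "fst (mdeg u)" "snd (mdeg u)" j "Suc (snd (mdeg u) j)"] IH
      by (simp add: Ann mdeg_Ann)
  qed
qed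

lemma mdeg_modes: "okw n u \<Longrightarrow> modes n (mdeg u)"
  by (auto simp: okw_def modes_def mdeg_def count_list_0_iff)

lemma lmul_supp:
  assumes "lmul x f \<gamma> \<noteq> 0"
  shows "\<exists>\<delta>. f \<delta> \<noteq> 0 \<and> mlen n \<gamma> \<le> mlen n \<delta> + 1"
proof -
  obtain a b where g: "\<gamma> = (a, b)" by (cases \<gamma>)
  show ?thesis
  proof (cases x)
    case (Cre j)
    with assms g have "a j > 0" "f (a(j := a j - 1), b) \<noteq> 0" by (auto split: if_splits)
    moreover have "mlen n (a, b) \<le> mlen n (a(j := a j - 1), b) + 1"
      using mlen_upd1[of n a j "a j - 1" b] by (auto split: if_splits)
    ultimately show ?thesis using g by blast
  next
    case (Ann j)
    with assms g have "(b j > 0 \<and> f (a, b(j := b j - 1)) \<noteq> 0) \<or> f (a(j := a j + 1), b) \<noteq> 0"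
      by (auto split: if_splits)
    moreover have "mlen n (a, b) \<le> mlen n (a, b(j := b j - 1)) + 1"
      using mlen_upd2[of n a b j "b j - 1"] by (auto split: if_splits)
    moreover have "mlen n (a, b) \<le> mlen n (a(j := a j + 1), b) + 1"
      using mlen_upd1[of n a j "a j + 1" b] by (auto split: if_splits)
    ultimately show ?thesis using g by blast
  qed
qed

lemma act_supp:
  assumes "act u f \<gamma> \<noteq> 0"
  shows "\<exists>\<delta>. f \<delta> \<noteq> 0 \<and> mlen n \<gamma> \<le> mlen n \<delta> + length u"
  using assms
proof (induction u arbitrary: \<gamma>)
  case Nil thus ?case by (intro exI[of _ \<gamma>]) auto
next
  case (Cons x u)
  then obtain \<delta> where "act u f \<delta> \<noteq> 0" "mlen n \<gamma> \<le> mlen n \<delta> + 1"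
    using lmul_supp[of x "act u f" \<gamma> n] by auto
  with Cons.IH[of \<delta>] show ?case by fastforce
qed

lemma lmul_modes:
  assumes "lmul x f \<gamma> \<noteq> 0" "gidx x < n" "\<And>\<delta>. f \<delta> \<noteq> 0 \<Longrightarrow> modes n \<delta>"
  shows "modes n \<gamma>"
proof -
  obtain a b where g: "\<gamma> = (a, b)" by (cases \<gamma>)
  show ?thesis
  proof (cases x)
    case (Cre j)
    with assms g have "a j > 0" "f (a(j := a j - 1), b) \<noteq> 0" by (auto split: if_splits)
    with assms(3) have "modes n (a(j := a j - 1), b)" by blast
    with \<open>a j > 0\<close> show ?thesis using g Cre assms(2)
      by (auto simp: modes_def split: if_splits)
  next
    case (Ann j)
    with assms g have "(b j > 0 \<and> f (a, b(j := b j - 1)) \<noteq> 0) \<or> f (a(j := a j + 1), b) \<noteq> 0"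
      by (auto split: if_splits)
    thus ?thesis
    proof
      assume "b j > 0 \<and> f (a, b(j := b j - 1)) \<noteq> 0"
      with assms(3) have "modes n (a, b(j := b j - 1))" "b j > 0" by blast+
      thus ?thesis using g Ann assms(2) by (auto simp: modes_def split: if_splits)
    next
      assume "f (a(j := a j + 1), b) \<noteq> 0"
      with assms(3) have "modes n (a(j := a j + 1), b)" by blast
      thus ?thesis using g Ann assms(2) by (auto simp: modes_def split: if_splits)
    qed
  qed
qed

lemma act_modes:
  assumes "act u f \<gamma> \<noteq> 0" "okw n u" "\<And>\<delta>. f \<delta> \<noteq> 0 \<Longrightarrow> modes n \<delta>"
  shows "modes n \<gamma>"
  using assms(1,2)
proof (induction u arbitrary: \<gamma>)
  case Nil thus ?case using assms(3) by simp
next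
  case (Cons x u)
  thus ?case using lmul_modes[of x "act u f" \<gamma> n] by (auto simp: okw_def)
qed

lemma basis_apply: "basis \<delta> \<gamma> = (if \<gamma> = \<delta> then 1 else 0)" by (simp add: basis_def)

lemma mon_modes: "okw n u \<Longrightarrow> mon u \<gamma> \<noteq> 0 \<Longrightarrow> modes n \<gamma>"
  unfolding mon_def by (rule act_modes) (auto simp: basis_apply modes_def split: if_splits)

lemma mon_mlen: "mon u \<gamma> \<noteq> 0 \<Longrightarrow> mlen n \<gamma> \<le> length u"
  using act_supp[of u "basis (\<lambda>_. 0, \<lambda>_. 0)" \<gamma> n]
  by (auto simp: mon_def basis_apply mlen_def split: if_splits)

lemma mon_Cons: "mon (x # u) = lmul x (mon u)" by (simp add: mon_def)
lemma mon_Nil: "mon [] = basis (\<lambda>_. 0, \<lambda>_. 0)" by (simp add: mon_def)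

lemma mon_top: "okw n u \<Longrightarrow> mon u (mdeg u) = 1 \<and> (\<forall>\<gamma>. \<gamma> \<noteq> mdeg u \<longrightarrow> mon u \<gamma> \<noteq> 0 \<longrightarrow> mlen n \<gamma> + 2 \<le> length u)"
proof (induction u)
  case Nil thus ?case by (simp add: mon_Nil mdeg_Nil basis_apply)
next
  case (Cons x u)
  hence ok: "okw n u" and xn: "gidx x < n" by (auto simp: okw_def)
  from Cons.IH[OF ok] have top: "mon u (mdeg u) = 1"
    and low: "\<And>\<gamma>. \<gamma> \<noteq> mdeg u \<Longrightarrow> mon u \<gamma> \<noteq> 0 \<Longrightarrow> mlen n \<gamma> + 2 \<le> length u" by auto
  have ml: "mlen n (mdeg u) = length u" using mlen_mdeg[OF ok] .
  obtain A B where AB: "mdeg u = (A, B)" by (cases "mdeg u")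
  show ?case
  proof (cases x)
    case (Cre j)
    have md: "mdeg (x # u) = (A(j := Suc (A j)), B)" by (simp add: Cre mdeg_Cre AB)
    have t: "mon (x # u) (mdeg (x # u)) = 1" using top unfolding md by (simp add: mon_Cons Cre AB)
    have "mon (x # u) \<gamma> \<noteq> 0 \<longrightarrow> mlen n \<gamma> + 2 \<le> length (x # u)" if ne: "\<gamma> \<noteq> mdeg (x # u)" for \<gamma>
    proof
      assume nz: "mon (x # u) \<gamma> \<noteq> 0"
      obtain a b where g: "\<gamma> = (a, b)" by (cases \<gamma>)
      from nz have aj: "a j > 0" and nz2: "mon u (a(j := a j - 1), b) \<noteq> 0"
        by (auto simp: mon_Cons Cre g split: if_splits)
      have "(a(j := a j - 1), b) \<noteq> mdeg u"
      proof
        assume "(a(j := a j - 1), b) = mdeg u"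
        hence "A = a(j := a j - 1)" "B = b" by (auto simp: AB)
        hence "\<gamma> = mdeg (x # u)" using aj by (auto simp: md g fun_eq_iff)
        with ne show False by simp
      qed
      from low[OF this nz2] have "mlen n (a(j := a j - 1), b) + 2 \<le> length u" .
      moreover have "mlen n (a, b) \<le> mlen n (a(j := a j - 1), b) + 1"
        using mlen_upd1[of n a j "a j - 1" b] by (auto split: if_splits)
      ultimately show "mlen n \<gamma> + 2 \<le> length (x # u)" by (simp add: g)
    qed
    with t show ?thesis by blast
  next
    case (Ann j)
    have jn: "j < n" using xn Ann by simp
    have md: "mdeg (x # u) = (A, B(j := Suc (B j)))" by (simp add: Ann mdeg_Ann AB)
    have "mon u (A(j := Suc (A j)), B(j := Suc (B j))) = 0"
    proof (rule ccontr)
      assume nz: "mon u (A(j := Suc (A j)), B(j := Suc (B j))) \<noteq> 0"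
      have "(A(j := Suc (A j)), B(j := Suc (B j))) \<noteq> mdeg u" using AB by (auto simp: fun_eq_iff)
      from low[OF this nz] have "mlen n (A(j := Suc (A j)), B(j := Suc (B j))) + 2 \<le> length u" .
      moreover have "mlen n (A(j := Suc (A j)), B(j := Suc (B j))) = mlen n (A, B(j := Suc (B j))) + 1"
        using mlen_upd1[of n A j "Suc (A j)" "B(j := Suc (B j))"] jn by simp
      moreover have "mlen n (A, B(j := Suc (B j))) = mlen n (A, B) + 1"
        using mlen_upd2[of n A B j "Suc (B j)"] jn by simp
      ultimately show False using ml AB by simp
    qed
    hence t: "mon (x # u) (mdeg (x # u)) = 1" using top unfolding md by (simp add: mon_Cons Ann AB)
    have "mon (x # u) \<gamma> \<noteq> 0 \<longrightarrow> mlen n \<gamma> + 2 \<le> length (x # u)" if ne: "\<gamma> \<noteq> mdeg (x # u)" for \<gamma>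
    proof
      assume nz: "mon (x # u) \<gamma> \<noteq> 0"
      obtain a b where g: "\<gamma> = (a, b)" by (cases \<gamma>)
      from nz have "(b j > 0 \<and> mon u (a, b(j := b j - 1)) \<noteq> 0) \<or> mon u (a(j := a j + 1), b) \<noteq> 0"
        by (auto simp: mon_Cons Ann g split: if_splits)
      thus "mlen n \<gamma> + 2 \<le> length (x # u)"
      proof
        assume h: "b j > 0 \<and> mon u (a, b(j := b j - 1)) \<noteq> 0"
        have "(a, b(j := b j - 1)) \<noteq> mdeg u"
        proof
          assume "(a, b(j := b j - 1)) = mdeg u"
          hence "A = a" "B = b(j := b j - 1)" by (auto simp: AB)
          hence "\<gamma> = mdeg (x # u)" using h by (auto simp: md g fun_eq_iff)
          with ne show False by simp
        qed
        from low[OF this] h have "mlen n (a, b(j := b j - 1)) + 2 \<le> length u" by blast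
        moreover have "mlen n (a, b) \<le> mlen n (a, b(j := b j - 1)) + 1"
          using mlen_upd2[of n a b j "b j - 1"] by (auto split: if_splits)
        ultimately show ?thesis by (simp add: g)
      next
        assume h: "mon u (a(j := a j + 1), b) \<noteq> 0"
        have e: "mlen n (a(j := a j + 1), b) = mlen n (a, b) + 1"
          using mlen_upd1[of n a j "a j + 1" b] jn by simp
        show ?thesis
        proof (cases "(a(j := a j + 1), b) = mdeg u")
          case True
          with ml e show ?thesis by (simp add: g)
        next
          case False
          from low[OF False h] e show ?thesis by (simp add: g)
        qed
      qed
    qed
    with t show ?thesis by blast
  qed
qed



fun rmul :: "gen \<Rightarrow> weyl \<Rightarrow> weyl" where
  "rmul (Ann j) g = (\<lambda>(\<alpha>, \<beta>). if \<beta> j > 0 then g (\<alpha>, \<beta>(j := \<beta> j - 1)) else 0)"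
| "rmul (Cre j) g = (\<lambda>(\<alpha>, \<beta>). (if \<alpha> j > 0 then g (\<alpha>(j := \<alpha> j - 1), \<beta>) else 0)
      + of_nat (\<beta> j + 1) * g (\<alpha>, \<beta>(j := \<beta> j + 1)))"

lemma lr_CA: "lmul (Cre j) (rmul (Ann k) g) = rmul (Ann k) (lmul (Cre j) g)"
  by (cases "j = k") (auto simp: fun_eq_iff fun_upd_twist)
lemma lr_CC: "lmul (Cre j) (rmul (Cre k) g) = rmul (Cre k) (lmul (Cre j) g)"
  by (cases "j = k") (auto simp: fun_eq_iff fun_upd_twist algebra_simps)
lemma lr_AA: "lmul (Ann j) (rmul (Ann k) g) = rmul (Ann k) (lmul (Ann j) g)"
  by (cases "j = k") (auto simp: fun_eq_iff fun_upd_twist algebra_simps)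
lemma lr_AC: "lmul (Ann j) (rmul (Cre k) g) = rmul (Cre k) (lmul (Ann j) g)"
  by (cases "j = k") (auto simp: fun_eq_iff fun_upd_twist algebra_simps)

lemma lr_comm: "lmul x (rmul y g) = rmul y (lmul x g)"
  by (cases x; cases y) (simp_all only: lr_CA lr_CC lr_AA lr_AC)

fun ract :: "gen list \<Rightarrow> weyl \<Rightarrow> weyl" where
  "ract [] g = g"
| "ract (y # ys) g = rmul y (ract ys g)"

lemma lmul_ract: "lmul x (ract ys g) = ract ys (lmul x g)"
  by (induction ys) (simp_all add: lr_comm)

lemma act_ract: "act u (ract ys g) = ract ys (act u g)"
  by (induction u) (simp_all add: lmul_ract)

lemma rmul_add: "rmul x (f + g) = rmul x f + rmul x g"
  by (cases x) (auto simp: fun_eq_iff algebra_simps)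
lemma rmul_sm: "rmul x (sm c f) = sm c (rmul x f)"
  by (cases x) (auto simp: fun_eq_iff algebra_simps)
lemma rmul_zero: "rmul x 0 = 0"
  by (cases x) (auto simp: fun_eq_iff)
lemma ract_add: "ract u (f + g) = ract u f + ract u g"
  by (induction u) (simp_all only: ract.simps rmul_add)
lemma ract_sm: "ract u (sm c f) = sm c (ract u f)"
  by (induction u) (simp_all only: ract.simps rmul_sm)
lemma ract_zero: "ract u 0 = 0"
  by (induction u) (simp_all only: ract.simps rmul_zero)
lemma ract_sum: "ract u (\<Sum>i\<in>I. F i) = (\<Sum>i\<in>I. ract u (F i))"
proof (induction I rule: infinite_finite_induct)
  case (infinite A) thus ?case by (simp only: sum.infinite[OF infinite] ract_zero)
next
  case empty thus ?case by (simp only: sum.empty ract_zero)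
next
  case (insert y A) thus ?case by (simp only: sum.insert[OF insert(1,2)] ract_add insert(3))
qed

lemma rmul_Ann_basis: "rmul (Ann j) (basis (a, b)) = basis (a, b(j := Suc (b j)))"
  by (auto simp: fun_eq_iff basis_apply)

lemma rmul_Cre_basis: "rmul (Cre j) (basis (a, \<lambda>_. 0)) = basis (a(j := Suc (a j)), \<lambda>_. 0)"
  by (auto simp: fun_eq_iff basis_apply)

lemma basis_gen: "modes n \<delta> \<Longrightarrow> \<exists>ys. ract ys (basis (\<lambda>_. 0, \<lambda>_. 0)) = basis \<delta>"
proof (induction "mlen n \<delta>" arbitrary: \<delta> rule: less_induct)
  case less
  obtain a b where d: "\<delta> = (a, b)" by (cases \<delta>)
  show ?case
  proof (cases "\<exists>j<n. b j > 0")
    case True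
    then obtain j where j: "j < n" "b j > 0" by blast
    let ?d = "(a, b(j := b j - 1))"
    have "mlen n ?d < mlen n \<delta>"
      using mlen_upd2[of n a b j "b j - 1"] j by (simp add: d)
    moreover have "modes n ?d" using less(2) by (auto simp: modes_def d)
    ultimately obtain ys where "ract ys (basis (\<lambda>_. 0, \<lambda>_. 0)) = basis ?d" using less(1) by blast
    hence "ract (Ann j # ys) (basis (\<lambda>_. 0, \<lambda>_. 0)) = basis \<delta>"
      using j rmul_Ann_basis[of j a "b(j := b j - 1)"] by (simp del: rmul.simps add: d)
    thus ?thesis by blast
  next
    case False
    hence b0: "b = (\<lambda>_. 0)" using less(2) by (auto simp: modes_def d fun_eq_iff) (meson not_le)
    show ?thesis
    proof (cases "\<exists>j<n. a j > 0")
      case True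
      then obtain j where j: "j < n" "a j > 0" by blast
      let ?d = "(a(j := a j - 1), b)"
      have "mlen n ?d < mlen n \<delta>"
        using mlen_upd1[of n a j "a j - 1" b] j by (simp add: d)
      moreover have "modes n ?d" using less(2) by (auto simp: modes_def d)
      ultimately obtain ys where "ract ys (basis (\<lambda>_. 0, \<lambda>_. 0)) = basis ?d" using less(1) by blast
      hence "ract (Cre j # ys) (basis (\<lambda>_. 0, \<lambda>_. 0)) = basis \<delta>"
        using j rmul_Cre_basis[of j "a(j := a j - 1)"] by (simp del: rmul.simps add: d b0)
      thus ?thesis by blast
    next
      case False
      hence "a = (\<lambda>_. 0)" using less(2) by (auto simp: modes_def d fun_eq_iff) (meson not_le)
      hence "ract [] (basis (\<lambda>_. 0, \<lambda>_. 0)) = basis \<delta>" using b0 d by simp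
      thus ?thesis by blast
    qed
  qed
qed

lemma lmul_Cre_basis: "lmul (Cre j) (basis (a, b)) = basis (a(j := Suc (a j)), b)"
  by (auto simp: fun_eq_iff basis_apply)

lemma lmul_Ann_basis0: "lmul (Ann j) (basis (\<lambda>_. 0, b)) = basis (\<lambda>_. 0, b(j := Suc (b j)))"
  by (auto simp: fun_eq_iff basis_apply)

lemma act_allCre: "(\<forall>x\<in>set v. \<exists>j. x = Cre j) \<Longrightarrow> act v (basis (a, b)) = basis (\<lambda>i. a i + count_list v (Cre i), b)"
proof (induction v)
  case Nil thus ?case by simp
next
  case (Cons x v)
  then obtain j where x: "x = Cre j" and IH: "act v (basis (a, b)) = basis (\<lambda>i. a i + count_list v (Cre i), b)" by auto
  have eq: "(\<lambda>i. a i + count_list v (Cre i))(j := Suc (a j + count_list v (Cre j))) = (\<lambda>i. a i + count_list (Cre j # v) (Cre i))"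
    by (auto simp: fun_eq_iff)
  show ?case unfolding act.simps x IH lmul_Cre_basis eq ..
qed

lemma act_allAnn: "(\<forall>x\<in>set v. \<exists>j. x = Ann j) \<Longrightarrow> act v (basis (\<lambda>_. 0, b)) = basis (\<lambda>_. 0, \<lambda>i. b i + count_list v (Ann i))"
proof (induction v)
  case Nil thus ?case by simp
next
  case (Cons x v)
  then obtain j where x: "x = Ann j" and IH: "act v (basis (\<lambda>_. 0, b)) = basis (\<lambda>_. 0, \<lambda>i. b i + count_list v (Ann i))" by auto
  have eq: "(\<lambda>i. b i + count_list v (Ann i))(j := Suc (b j + count_list v (Ann j))) = (\<lambda>i. b i + count_list (Ann j # v) (Ann i))"
    by (auto simp: fun_eq_iff)
  show ?case unfolding act.simps x IH lmul_Ann_basis0 eq ..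
qed

lemma count_replicate: "count_list (replicate k x) y = (if x = y then k else 0)"
  by (induction k) auto

lemma count_concat_rep:
  assumes "inj G"
  shows "count_list (concat (map (\<lambda>j. replicate (f j) (G j)) [0..<m])) (G i) = (if i < m then f i else 0)"
  by (induction m) (auto simp: count_replicate inj_eq[OF assms])

lemma mon_word: "modes n \<gamma> \<Longrightarrow> mon (word n \<gamma>) = basis \<gamma>"
proof -
  assume md: "modes n \<gamma>"
  let ?C = "concat (map (\<lambda>j. replicate (fst \<gamma> j) (Cre j)) [0..<n])"
  let ?A = "concat (map (\<lambda>j. replicate (snd \<gamma> j) (Ann j)) [0..<n])"
  have iC: "inj Cre" and iA: "inj Ann" by (auto simp: inj_def)
  have "act ?A (basis (\<lambda>_. 0, \<lambda>_. 0)) = basis (\<lambda>_. 0, \<lambda>i. 0 + count_list ?A (Ann i))"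
    by (rule act_allAnn) auto
  also have "(\<lambda>i. 0 + count_list ?A (Ann i)) = snd \<gamma>"
    using md by (auto simp: fun_eq_iff count_concat_rep[OF iA] modes_def)
  finally have 1: "act ?A (basis (\<lambda>_. 0, \<lambda>_. 0)) = basis (\<lambda>_. 0, snd \<gamma>)" .
  have "act ?C (basis (\<lambda>_. 0, snd \<gamma>)) = basis (\<lambda>i. 0 + count_list ?C (Cre i), snd \<gamma>)"
    by (rule act_allCre) auto
  also have "(\<lambda>i. 0 + count_list ?C (Cre i)) = fst \<gamma>"
    using md by (auto simp: fun_eq_iff count_concat_rep[OF iC] modes_def)
  finally have 2: "act ?C (basis (\<lambda>_. 0, snd \<gamma>)) = basis \<gamma>" by simp
  show ?thesis using 1 2 by (simp add: mon_def word_def act_append)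
qed

lemma okw_word: "okw n (word n \<gamma>)"
  by (auto simp: okw_def word_def)

definition wsupp :: "weyl \<Rightarrow> midx set" where "wsupp f = {\<gamma>. f \<gamma> \<noteq> 0}"

lemma finite_box: "finite {\<gamma>. modes n \<gamma> \<and> mlen n \<gamma> \<le> N}"
proof -
  let ?B = "{\<gamma>. modes n \<gamma> \<and> mlen n \<gamma> \<le> N}"
  let ?h = "\<lambda>\<gamma>. (map (fst \<gamma>) [0..<n], map (snd \<gamma>) [0..<n])"
  let ?L = "{xs. set xs \<subseteq> {..N} \<and> length xs = n}"
  have "inj_on ?h ?B"
  proof (rule inj_onI)
    fix x y assume x: "x \<in> ?B" and y: "y \<in> ?B" and e: "?h x = ?h y"
    have "fst x = fst y" "snd x = snd y"
      using x y e by (auto simp: fun_eq_iff modes_def map_eq_conv)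
    thus "x = y" by (simp add: prod_eq_iff)
  qed
  moreover have "?h ` ?B \<subseteq> ?L \<times> ?L"
  proof
    fix z assume "z \<in> ?h ` ?B"
    then obtain \<gamma> where g: "\<gamma> \<in> ?B" and z: "z = ?h \<gamma>" by blast
    have "fst \<gamma> j \<le> N \<and> snd \<gamma> j \<le> N" if "j < n" for j
    proof -
      have "fst \<gamma> j \<le> (\<Sum>i<n. fst \<gamma> i)" "snd \<gamma> j \<le> (\<Sum>i<n. snd \<gamma> i)"
        using that by (auto intro!: member_le_sum)
      thus ?thesis using g by (auto simp: mlen_def)
    qed
    thus "z \<in> ?L \<times> ?L" using z by auto
  qed
  moreover have "finite (?L \<times> ?L)" by (auto intro: finite_lists_length_eq)
  ultimately show ?thesis by (meson finite_imageD finite_subset)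
qed

lemma mon_supp_box: "okw n u \<Longrightarrow> wsupp (mon u) \<subseteq> {\<gamma>. modes n \<gamma> \<and> mlen n \<gamma> \<le> length u}"
  using mon_modes mon_mlen by (auto simp: wsupp_def)

lemma finite_mon: "okw n u \<Longrightarrow> finite (wsupp (mon u))"
  by (rule finite_subset[OF mon_supp_box finite_box])

lemma expand: "finite (wsupp f) \<Longrightarrow> (\<Sum>\<gamma>\<in>wsupp f. sm (f \<gamma>) (basis \<gamma>)) = f"
proof (rule ext)
  fix \<delta> assume fin: "finite (wsupp f)"
  have "(\<Sum>\<gamma>\<in>wsupp f. sm (f \<gamma>) (basis \<gamma>)) \<delta> = (\<Sum>\<gamma>\<in>wsupp f. f \<gamma> * (if \<delta> = \<gamma> then 1 else 0))"
    by (simp add: sum_fun_apply basis_apply)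
  also have "\<dots> = (\<Sum>\<gamma>\<in>wsupp f. if \<gamma> = \<delta> then f \<gamma> else 0)"
    by (intro sum.cong) auto
  also have "\<dots> = f \<delta>" using fin by (simp add: sum.delta' wsupp_def)
  finally show "(\<Sum>\<gamma>\<in>wsupp f. sm (f \<gamma>) (basis \<gamma>)) \<delta> = f \<delta>" .
qed

abbreviation b0 :: weyl where "b0 \<equiv> basis (\<lambda>_. 0, \<lambda>_. 0)"

lemma L1_basis:
  assumes ok: "okw n u" and md: "modes n \<delta>"
  shows "(\<Sum>\<gamma>\<in>wsupp (mon u). sm (mon u \<gamma>) (act (word n \<gamma>) (basis \<delta>))) = act u (basis \<delta>)"
proof -
  obtain ys where ys: "ract ys b0 = basis \<delta>" using basis_gen[OF md] by blast
  have "(\<Sum>\<gamma>\<in>wsupp (mon u). sm (mon u \<gamma>) (act (word n \<gamma>) (basis \<delta>)))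
      = (\<Sum>\<gamma>\<in>wsupp (mon u). sm (mon u \<gamma>) (ract ys (basis \<gamma>)))"
  proof (intro sum.cong refl)
    fix \<gamma> assume "\<gamma> \<in> wsupp (mon u)"
    hence "modes n \<gamma>" using mon_modes[OF ok] by (auto simp: wsupp_def)
    hence "act (word n \<gamma>) (basis \<delta>) = ract ys (basis \<gamma>)"
      by (simp add: ys[symmetric] act_ract mon_word[symmetric] mon_def)
    thus "sm (mon u \<gamma>) (act (word n \<gamma>) (basis \<delta>)) = sm (mon u \<gamma>) (ract ys (basis \<gamma>))" by simp
  qed
  also have "\<dots> = ract ys (\<Sum>\<gamma>\<in>wsupp (mon u). sm (mon u \<gamma>) (basis \<gamma>))"
    by (simp add: ract_sum ract_sm)
  also have "\<dots> = ract ys (mon u)" by (simp add: expand[OF finite_mon[OF ok]])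
  also have "\<dots> = act u (basis \<delta>)" by (simp add: ys[symmetric] act_ract mon_def)
  finally show ?thesis .
qed

lemma L1:
  assumes ok: "okw n u" and fin: "finite (wsupp g)" and md: "\<And>\<delta>. \<delta> \<in> wsupp g \<Longrightarrow> modes n \<delta>"
  shows "(\<Sum>\<gamma>\<in>wsupp (mon u). sm (mon u \<gamma>) (act (word n \<gamma>) g)) = act u g"
proof -
  let ?D = "wsupp g" and ?S = "wsupp (mon u)"
  have eg: "g = (\<Sum>\<delta>\<in>?D. sm (g \<delta>) (basis \<delta>))" by (rule expand[OF fin, symmetric])
  have A: "act w g = (\<Sum>\<delta>\<in>?D. sm (g \<delta>) (act w (basis \<delta>)))" for w
  proof -
    have "act w g = act w (\<Sum>\<delta>\<in>?D. sm (g \<delta>) (basis \<delta>))" by (rule arg_cong[OF eg])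
    thus ?thesis by (simp add: act_sum act_sm)
  qed
  have "(\<Sum>\<gamma>\<in>?S. sm (mon u \<gamma>) (act (word n \<gamma>) g))
      = (\<Sum>\<gamma>\<in>?S. sm (mon u \<gamma>) (\<Sum>\<delta>\<in>?D. sm (g \<delta>) (act (word n \<gamma>) (basis \<delta>))))"
    by (simp only: A)
  also have "\<dots> = (\<Sum>\<delta>\<in>?D. sm (g \<delta>) (\<Sum>\<gamma>\<in>?S. sm (mon u \<gamma>) (act (word n \<gamma>) (basis \<delta>))))"
    by (rule ext) (simp add: sum_fun_apply sum_distrib_left mult.left_commute sum.swap[of _ ?S])
  also have "\<dots> = (\<Sum>\<delta>\<in>?D. sm (g \<delta>) (act u (basis \<delta>)))"
    by (intro sum.cong refl) (simp add: L1_basis[OF ok md])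
  also have "\<dots> = act u g" by (simp only: A)
  finally show ?thesis .
qed

lemma wmul_eq:
  assumes "finite S" "wsupp f \<subseteq> S"
  shows "wmul n f g = (\<Sum>\<gamma>\<in>S. sm (f \<gamma>) (act (word n \<gamma>) g))"
proof -
  have "wmul n f g = (\<Sum>\<gamma>\<in>wsupp f. sm (f \<gamma>) (act (word n \<gamma>) g))"
    by (simp add: wmul_def wsupp_def sm_def)
  also have "\<dots> = (\<Sum>\<gamma>\<in>S. sm (f \<gamma>) (act (word n \<gamma>) g))"
    by (rule sum.mono_neutral_left) (use assms in \<open>auto simp: wsupp_def fun_eq_iff\<close>)
  finally show ?thesis .
qed

lemma L1S:
  assumes ok: "okw n u" and fin: "finite (wsupp g)" and md: "\<And>\<delta>. \<delta> \<in> wsupp g \<Longrightarrow> modes n \<delta>"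
    and S: "finite S" "wsupp (mon u) \<subseteq> S"
  shows "(\<Sum>\<gamma>\<in>S. sm (mon u \<gamma>) (act (word n \<gamma>) g)) = act u g"
proof -
  have "(\<Sum>\<gamma>\<in>S. sm (mon u \<gamma>) (act (word n \<gamma>) g)) = (\<Sum>\<gamma>\<in>wsupp (mon u). sm (mon u \<gamma>) (act (word n \<gamma>) g))"
    by (rule sum.mono_neutral_right) (use S in \<open>auto simp: wsupp_def fun_eq_iff\<close>)
  also have "\<dots> = act u g" by (rule L1[OF ok fin md])
  finally show ?thesis .
qed



definition wij :: "gen list \<Rightarrow> gen list \<Rightarrow> nat \<Rightarrow> nat \<Rightarrow> gen list" where
  "wij u v i j = take i u @ take j v @ drop (Suc j) v @ drop (Suc i) u"

definition Dk :: "(nat \<Rightarrow> nat) \<Rightarrow> (nat \<Rightarrow> nat) \<Rightarrow> nat \<Rightarrow> midx" where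
  "Dk A B k = (\<lambda>m. A m - (if m = k then 1 else 0), \<lambda>m. B m - (if m = k then 1 else 0))"

lemma count_split: "i < length u \<Longrightarrow>
  count_list u x = count_list (take i u) x + (if u!i = x then 1 else 0) + count_list (drop (Suc i) u) x"
proof -
  assume "i < length u"
  hence "u = take i u @ u!i # drop (Suc i) u" by (rule id_take_nth_drop)
  hence "count_list u x = count_list (take i u @ u!i # drop (Suc i) u) x" by simp
  thus ?thesis by simp
qed

lemma length_wij: "i < length u \<Longrightarrow> j < length v \<Longrightarrow> length (wij u v i j) + 2 = length u + length v"
  by (simp add: wij_def)

lemma okw_wij: "okw n u \<Longrightarrow> okw n v \<Longrightarrow> okw n (wij u v i j)"
  unfolding okw_def wij_def by (auto dest: in_set_takeD in_set_dropD)

lemma eps_nz: "eps x y \<noteq> 0 \<Longrightarrow> (\<exists>k. x = Ann k \<and> y = Cre k) \<or> (\<exists>k. x = Cre k \<and> y = Ann k)"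
  by (cases x; cases y) (auto split: if_splits)

lemma mdeg_wij:
  assumes i: "i < length u" and j: "j < length v" and e: "eps (u!i) (v!j) \<noteq> 0"
  shows "mdeg (wij u v i j) = Dk (fst (mdeg (u @ v))) (snd (mdeg (u @ v))) (gidx (u!i))"
proof -
  have cu: "\<And>x. count_list u x = count_list (take i u) x + (if u!i = x then 1 else 0) + count_list (drop (Suc i) u) x"
    using count_split[OF i] .
  have cv: "\<And>x. count_list v x = count_list (take j v) x + (if v!j = x then 1 else 0) + count_list (drop (Suc j) v) x"
    using count_split[OF j] .
  have cw: "\<And>x. count_list (wij u v i j) x = count_list (take i u) x + count_list (drop (Suc i) u) x
      + count_list (take j v) x + count_list (drop (Suc j) v) x" by (simp add: wij_def)
  from eps_nz[OF e] show ?thesis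
  proof
    assume "\<exists>k. u!i = Ann k \<and> v!j = Cre k"
    then obtain k where a: "u!i = Ann k" and b: "v!j = Cre k" by blast
    show ?thesis unfolding mdeg_def Dk_def
      using cu cv cw a b by (auto simp: fun_eq_iff)
  next
    assume "\<exists>k. u!i = Cre k \<and> v!j = Ann k"
    then obtain k where a: "u!i = Cre k" and b: "v!j = Ann k" by blast
    show ?thesis unfolding mdeg_def Dk_def
      using cu cv cw a b by (auto simp: fun_eq_iff)
  qed
qed

definition TT :: "gen list \<Rightarrow> gen list \<Rightarrow> weyl" where
  "TT u v = (\<Sum>i<length u. \<Sum>j<length v. sm (eps (u!i) (v!j)) (basis (mdeg (wij u v i j))))"

lemma Z_expand: "mon (u @ v) - mon (v @ u) = (\<Sum>i<length u. \<Sum>j<length v. sm (eps (u!i) (v!j)) (mon (wij u v i j)))"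
  unfolding mon_def wij_def using E[of u v b0] by simp

lemma sum_nz: "(\<Sum>i\<in>I. f i) \<noteq> (0::complex) \<Longrightarrow> \<exists>i\<in>I. f i \<noteq> 0"
  by (meson sum.neutral)

lemma ZT:
  assumes ok: "okw n u" "okw n v"
    and nz: "(mon (u @ v) - mon (v @ u) - TT u v) \<gamma> \<noteq> 0"
  shows "mlen n \<gamma> + 4 \<le> length u + length v"
proof -
  have "(mon (u @ v) - mon (v @ u) - TT u v) \<gamma>
      = (\<Sum>i<length u. \<Sum>j<length v. eps (u!i) (v!j) * (mon (wij u v i j) \<gamma> - basis (mdeg (wij u v i j)) \<gamma>))"
    unfolding Z_expand TT_def
    by (simp add: sum_fun_apply sum_subtractf[symmetric] algebra_simps)
  with nz obtain i j where i: "i < length u" and j: "j < length v"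
    and t: "eps (u!i) (v!j) * (mon (wij u v i j) \<gamma> - basis (mdeg (wij u v i j)) \<gamma>) \<noteq> 0"
    by (metis (no_types, lifting) lessThan_iff sum_nz)
  have okij: "okw n (wij u v i j)" by (rule okw_wij[OF ok])
  from mon_top[OF okij] have top: "mon (wij u v i j) (mdeg (wij u v i j)) = 1"
    and low: "\<And>\<gamma>. \<gamma> \<noteq> mdeg (wij u v i j) \<Longrightarrow> mon (wij u v i j) \<gamma> \<noteq> 0 \<Longrightarrow> mlen n \<gamma> + 2 \<le> length (wij u v i j)"
    by auto
  have ne: "\<gamma> \<noteq> mdeg (wij u v i j)" using t top by (auto simp: basis_apply)
  hence "mon (wij u v i j) \<gamma> \<noteq> 0" using t by (auto simp: basis_apply)
  from low[OF ne this] length_wij[OF i j] show ?thesis by simp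
qed

lemma sum_sm_left: "(\<Sum>j\<in>J. sm (c j) f) = sm (\<Sum>j\<in>J. c j) f"
  by (rule ext) (simp add: sum_fun_apply sum_distrib_right)

lemma sum_nth_list: "(\<Sum>j<length v. f (v!j)) = sum_list (map f v)"
  by (simp add: sum_list_sum_nth atLeast0LessThan)

definition kap :: "gen list \<Rightarrow> gen \<Rightarrow> complex" where
  "kap v x = (case x of Ann k \<Rightarrow> of_nat (count_list v (Cre k)) | Cre k \<Rightarrow> - of_nat (count_list v (Ann k)))"

lemma sum_eps: "(\<Sum>j<length v. eps x (v!j)) = kap v x"
proof -
  have "sum_list (map (eps x) v) = kap v x"
  proof (cases x)
    case (Cre k)
    have e: "eps (Cre k) y = (if y = Ann k then -1 else 0)" for y by (cases y) auto
    show ?thesis using Cre by (induction v) (auto simp: kap_def e)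
  next
    case (Ann k)
    have e: "eps (Ann k) y = (if y = Cre k then 1 else 0)" for y by (cases y) auto
    show ?thesis using Ann by (induction v) (auto simp: kap_def e)
  qed
  thus ?thesis by (simp add: sum_nth_list)
qed

lemma regroup:
  assumes "okw n u"
  shows "sum_list (map H u) = (\<Sum>k<n. sm (of_nat (count_list u (Ann k))) (H (Ann k)) + sm (of_nat (count_list u (Cre k))) (H (Cre k)))"
  using assms
proof (induction u)
  case Nil thus ?case by (simp add: fun_eq_iff sum_fun_apply)
next
  case (Cons x u)
  have ok': "okw n u" and xn: "gidx x < n" using Cons.prems by (auto simp: okw_def)
  note IH = Cons.IH[OF ok']
  have "(\<Sum>k<n. sm (of_nat (count_list (x # u) (Ann k))) (H (Ann k)) + sm (of_nat (count_list (x # u) (Cre k))) (H (Cre k)))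
      = (\<Sum>k<n. (sm (of_nat (count_list u (Ann k))) (H (Ann k)) + sm (of_nat (count_list u (Cre k))) (H (Cre k)))
           + (if x = Ann k \<or> x = Cre k then H x else 0))"
    by (intro sum.cong refl) (auto simp: fun_eq_iff algebra_simps)
  also have "\<dots> = sum_list (map H u) + (\<Sum>k<n. if x = Ann k \<or> x = Cre k then H x else 0)"
    by (simp only: sum.distrib IH)
  also have "(\<Sum>k<n. if x = Ann k \<or> x = Cre k then H x else 0) = (\<Sum>k<n. if k = gidx x then H x else 0)"
    by (intro sum.cong refl) (cases x; auto)
  also have "\<dots> = H x" using xn by simp
  finally show ?case by (simp add: add.commute)
qed

lemma TT_formula:
  assumes ok: "okw n u"
  shows "TT u v = (\<Sum>k<n. sm (of_nat (count_list u (Ann k)) * of_nat (count_list v (Cre k))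
        - of_nat (count_list u (Cre k)) * of_nat (count_list v (Ann k)))
       (basis (Dk (fst (mdeg (u @ v))) (snd (mdeg (u @ v))) k)))"
proof -
  let ?D = "Dk (fst (mdeg (u @ v))) (snd (mdeg (u @ v)))"
  have "TT u v = (\<Sum>i<length u. \<Sum>j<length v. sm (eps (u!i) (v!j)) (basis (?D (gidx (u!i)))))"
    unfolding TT_def
  proof (intro sum.cong refl)
    fix i j assume "i \<in> {..<length u}" "j \<in> {..<length v}"
    thus "sm (eps (u!i) (v!j)) (basis (mdeg (wij u v i j))) = sm (eps (u!i) (v!j)) (basis (?D (gidx (u!i))))"
      by (cases "eps (u!i) (v!j) = 0") (simp_all add: mdeg_wij)
  qed
  also have "\<dots> = (\<Sum>i<length u. sm (kap v (u!i)) (basis (?D (gidx (u!i)))))"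
    by (simp only: sum_sm_left sum_eps)
  also have "\<dots> = sum_list (map (\<lambda>x. sm (kap v x) (basis (?D (gidx x)))) u)"
    by (rule sum_nth_list)
  also have "\<dots> = (\<Sum>k<n. sm (of_nat (count_list u (Ann k))) (sm (kap v (Ann k)) (basis (?D k)))
       + sm (of_nat (count_list u (Cre k))) (sm (kap v (Cre k)) (basis (?D k))))"
    using regroup[OF ok, of "\<lambda>x. sm (kap v x) (basis (?D (gidx x)))"] by (simp only: gidx.simps)
  also have "\<dots> = (\<Sum>k<n. sm (of_nat (count_list u (Ann k)) * of_nat (count_list v (Cre k))
        - of_nat (count_list u (Cre k)) * of_nat (count_list v (Ann k))) (basis (?D k)))"
    by (intro sum.cong refl) (simp add: fun_eq_iff kap_def ring_distribs)
  finally show ?thesis .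
qed



definition chg :: "midx \<Rightarrow> nat \<Rightarrow> int" where
  "chg \<gamma> j = int (fst \<gamma> j) - int (snd \<gamma> j)"

lemma lmul_chg:
  assumes "lmul x f \<gamma> \<noteq> 0"
  shows "\<exists>\<delta>. f \<delta> \<noteq> 0 \<and> (\<forall>j. chg \<gamma> j = chg \<delta> j + (if x = Cre j then 1 else 0) - (if x = Ann j then 1 else 0))"
proof -
  obtain a b where g: "\<gamma> = (a, b)" by (cases \<gamma>)
  show ?thesis
  proof (cases x)
    case (Cre j)
    with assms g have "a j > 0" "f (a(j := a j - 1), b) \<noteq> 0" by (auto split: if_splits)
    thus ?thesis using g Cre by (intro exI[of _ "(a(j := a j - 1), b)"]) (auto simp: chg_def of_nat_diff)
  next
    case (Ann j)
    with assms g have "(b j > 0 \<and> f (a, b(j := b j - 1)) \<noteq> 0) \<or> f (a(j := a j + 1), b) \<noteq> 0"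
      by (auto split: if_splits)
    thus ?thesis
    proof
      assume h: "b j > 0 \<and> f (a, b(j := b j - 1)) \<noteq> 0"
      thus ?thesis using g Ann by (intro exI[of _ "(a, b(j := b j - 1))"]) (auto simp: chg_def of_nat_diff)
    next
      assume h: "f (a(j := a j + 1), b) \<noteq> 0"
      thus ?thesis using g Ann by (intro exI[of _ "(a(j := a j + 1), b)"]) (auto simp: chg_def)
    qed
  qed
qed

lemma act_chg:
  assumes "act v f \<gamma> \<noteq> 0"
  shows "\<exists>\<delta>. f \<delta> \<noteq> 0 \<and> (\<forall>j. chg \<gamma> j = chg \<delta> j + int (count_list v (Cre j)) - int (count_list v (Ann j)))"
  using assms
proof (induction v arbitrary: \<gamma>)
  case Nil thus ?case by (intro exI[of _ \<gamma>]) auto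
next
  case (Cons x v)
  from lmul_chg[of x "act v f" \<gamma>] Cons.prems obtain \<delta>1 where d1: "act v f \<delta>1 \<noteq> 0"
    and r1: "\<forall>j. chg \<gamma> j = chg \<delta>1 j + (if x = Cre j then 1 else 0) - (if x = Ann j then 1 else 0)" by auto
  from Cons.IH[OF d1] obtain \<delta> where "f \<delta> \<noteq> 0"
    and r: "\<forall>j. chg \<delta>1 j = chg \<delta> j + int (count_list v (Cre j)) - int (count_list v (Ann j))" by blast
  thus ?case using r1 by (intro exI[of _ \<delta>]) auto
qed

abbreviation z0 :: "nat \<Rightarrow> nat" where "z0 \<equiv> \<lambda>_. 0"

lemma act_row:
  assumes "\<And>\<rho>. g (\<rho>, z0) = g' (\<rho>, z0)"
  shows "act v g (\<rho>, z0) = act v g' (\<rho>, z0)"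
proof (induction v arbitrary: \<rho>)
  case Nil thus ?case using assms by simp
next
  case (Cons x v)
  show ?case
  proof (cases x)
    case (Cre j)
    have e: "act (Cre j # v) h (\<rho>, z0) = (if 0 < \<rho> j then act v h (\<rho>(j := \<rho> j - 1), z0) else 0)" for h
      by simp
    show ?thesis unfolding Cre e by (simp only: Cons.IH)
  next
    case (Ann j)
    have e: "act (Ann j # v) h (\<rho>, z0) = of_nat (\<rho> j + 1) * act v h (\<rho>(j := \<rho> j + 1), z0)" for h
      by simp
    show ?thesis unfolding Ann e by (simp only: Cons.IH)
  qed
qed

lemma act_allAnn_row:
  assumes "\<forall>x\<in>set v. \<exists>j. x = Ann j"
  shows "\<exists>c::nat. c > 0 \<and> act v g (\<rho>, z0) = of_nat c * g (\<lambda>j. \<rho> j + count_list v (Ann j), z0)"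
  using assms
proof (induction v arbitrary: \<rho>)
  case Nil thus ?case by (intro exI[of _ 1]) auto
next
  case (Cons x v)
  then obtain j where x: "x = Ann j" and all: "\<forall>x\<in>set v. \<exists>j. x = Ann j" by auto
  from Cons.IH[OF all, of "\<rho>(j := \<rho> j + 1)"] obtain c where c: "c > 0"
    and e: "act v g (\<rho>(j := \<rho> j + 1), z0) = of_nat c * g (\<lambda>i. (\<rho>(j := \<rho> j + 1)) i + count_list v (Ann i), z0)"
    by blast
  have f: "(\<lambda>i. (\<rho>(j := \<rho> j + 1)) i + count_list v (Ann i)) = (\<lambda>i. \<rho> i + count_list (x # v) (Ann i))"
    by (auto simp: fun_eq_iff x)
  have "act (x # v) g (\<rho>, z0) = of_nat (\<rho> j + 1) * act v g (\<rho>(j := \<rho> j + 1), z0)"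
    by (simp add: x)
  also have "\<dots> = of_nat ((\<rho> j + 1) * c) * g (\<lambda>i. \<rho> i + count_list (x # v) (Ann i), z0)"
    by (simp only: e f of_nat_mult mult.assoc)
  finally show ?case using c by (intro exI[of _ "(\<rho> j + 1) * c"]) auto
qed

lemma act_allCre_row:
  assumes "\<forall>x\<in>set v. \<exists>j. x = Cre j"
  shows "act v g (\<rho>, z0) = (if \<forall>j. count_list v (Cre j) \<le> \<rho> j then g (\<lambda>j. \<rho> j - count_list v (Cre j), z0) else 0)"
  using assms
proof (induction v arbitrary: \<rho>)
  case Nil thus ?case by simp
next
  case (Cons x v)
  then obtain j where x: "x = Cre j" and all: "\<forall>x\<in>set v. \<exists>j. x = Cre j" by auto
  note IH = Cons.IH[OF all]
  show ?case
  proof (cases "\<rho> j > 0")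
    case False
    hence nc: "\<not> (\<forall>i. count_list (x # v) (Cre i) \<le> \<rho> i)" by (auto simp: x intro!: exI[of _ j])
    have "act (x # v) g (\<rho>, z0) = 0" using False by (simp add: x)
    thus ?thesis by (subst if_not_P[OF nc])
  next
    case True
    have "act (x # v) g (\<rho>, z0) = act v g (\<rho>(j := \<rho> j - 1), z0)" using True by (simp add: x)
    also have "\<dots> = (if \<forall>i. count_list v (Cre i) \<le> (\<rho>(j := \<rho> j - 1)) i
        then g (\<lambda>i. (\<rho>(j := \<rho> j - 1)) i - count_list v (Cre i), z0) else 0)" by (rule IH)
    also have "(\<forall>i. count_list v (Cre i) \<le> (\<rho>(j := \<rho> j - 1)) i) = (\<forall>i. count_list (x # v) (Cre i) \<le> \<rho> i)"
      using True by (auto simp: x)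
    also have "(\<lambda>i. (\<rho>(j := \<rho> j - 1)) i - count_list v (Cre i)) = (\<lambda>i. \<rho> i - count_list (x # v) (Cre i))"
      by (auto simp: fun_eq_iff x)
    finally show ?thesis .
  qed
qed

lemma cnt_C: "modes n \<gamma> \<Longrightarrow> count_list (concat (map (\<lambda>j. replicate (fst \<gamma> j) (Cre j)) [0..<n])) (Cre i) = fst \<gamma> i"
proof -
  assume md: "modes n \<gamma>"
  have iC: "inj Cre" by (auto simp: inj_def)
  show ?thesis using md by (auto simp: count_concat_rep[OF iC] modes_def)
qed

lemma cnt_A: "modes n \<gamma> \<Longrightarrow> count_list (concat (map (\<lambda>j. replicate (snd \<gamma> j) (Ann j)) [0..<n])) (Ann i) = snd \<gamma> i"
proof -
  assume md: "modes n \<gamma>"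
  have iA: "inj Ann" by (auto simp: inj_def)
  show ?thesis using md by (auto simp: count_concat_rep[OF iA] modes_def)
qed

lemma word_row:
  assumes md: "modes n \<gamma>"
  shows "act (word n \<gamma>) (basis (\<sigma>, z0)) (\<rho>, z0) \<noteq> 0 \<longleftrightarrow>
    ((\<forall>j. fst \<gamma> j \<le> \<rho> j) \<and> (\<lambda>j. \<rho> j - fst \<gamma> j + snd \<gamma> j) = \<sigma>)"
proof -
  let ?C = "concat (map (\<lambda>j. replicate (fst \<gamma> j) (Cre j)) [0..<n])"
  let ?A = "concat (map (\<lambda>j. replicate (snd \<gamma> j) (Ann j)) [0..<n])"
  have "act (word n \<gamma>) (basis (\<sigma>, z0)) (\<rho>, z0) = act ?C (act ?A (basis (\<sigma>, z0))) (\<rho>, z0)"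
    by (simp add: word_def act_append)
  also have "\<dots> = (if \<forall>j. count_list ?C (Cre j) \<le> \<rho> j
      then act ?A (basis (\<sigma>, z0)) (\<lambda>j. \<rho> j - count_list ?C (Cre j), z0) else 0)"
    by (rule act_allCre_row) auto
  also have "\<dots> = (if \<forall>j. fst \<gamma> j \<le> \<rho> j
      then act ?A (basis (\<sigma>, z0)) (\<lambda>j. \<rho> j - fst \<gamma> j, z0) else 0)"
    by (simp only: cnt_C[OF md])
  finally have e: "act (word n \<gamma>) (basis (\<sigma>, z0)) (\<rho>, z0) = \<dots>" .
  obtain c :: nat where c: "c > 0" and
    ec: "act ?A (basis (\<sigma>, z0)) (\<lambda>j. \<rho> j - fst \<gamma> j, z0)
      = of_nat c * basis (\<sigma>, z0) (\<lambda>j. (\<lambda>j. \<rho> j - fst \<gamma> j) j + count_list ?A (Ann j), z0)"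
    using act_allAnn_row[of ?A "basis (\<sigma>, z0)" "\<lambda>j. \<rho> j - fst \<gamma> j"] by auto
  have "(\<lambda>j. (\<lambda>j. \<rho> j - fst \<gamma> j) j + count_list ?A (Ann j)) = (\<lambda>j. \<rho> j - fst \<gamma> j + snd \<gamma> j)"
    by (simp only: cnt_A[OF md])
  with ec c e show ?thesis by (auto simp: basis_apply)
qed

definition cz :: "gen list \<Rightarrow> bool" where
  "cz u \<longleftrightarrow> (\<forall>j. count_list u (Cre j) = count_list u (Ann j))"

lemma diag:
  assumes "cz u"
  shows "act u (basis (\<sigma>, z0)) (\<rho>, z0) = (if \<rho> = \<sigma> then act u (basis (\<sigma>, z0)) (\<sigma>, z0) else 0)"
proof (cases "\<rho> = \<sigma>")
  case False
  show ?thesis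
  proof (rule ccontr)
    assume "\<not> ?thesis"
    hence "act u (basis (\<sigma>, z0)) (\<rho>, z0) \<noteq> 0" using False by simp
    from act_chg[OF this] obtain \<delta> where d: "basis (\<sigma>, z0) \<delta> \<noteq> 0"
      and r: "\<forall>j. chg (\<rho>, z0) j = chg \<delta> j + int (count_list u (Cre j)) - int (count_list u (Ann j))" by blast
    from d have "\<delta> = (\<sigma>, z0)" by (auto simp: basis_apply split: if_splits)
    with r assms have "\<forall>j. \<rho> j = \<sigma> j" by (auto simp: chg_def cz_def)
    with False show False by auto
  qed
qed simp

lemma comm_diag:
  assumes "cz u" "cz v"
  shows "act (u @ v) (basis (\<sigma>, z0)) (\<rho>, z0) = act (v @ u) (basis (\<sigma>, z0)) (\<rho>, z0)"
proof -
  have key: "act (a @ b) (basis (\<sigma>, z0)) (\<rho>, z0)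
      = act b (basis (\<sigma>, z0)) (\<sigma>, z0) * (if \<rho> = \<sigma> then act a (basis (\<sigma>, z0)) (\<sigma>, z0) else 0)"
    if "cz a" "cz b" for a b
  proof -
    let ?c = "act b (basis (\<sigma>, z0)) (\<sigma>, z0)"
    have r: "act b (basis (\<sigma>, z0)) (\<rho>', z0) = sm ?c (basis (\<sigma>, z0)) (\<rho>', z0)" for \<rho>'
      by (subst diag[OF that(2)]) (simp add: basis_apply)
    have "act (a @ b) (basis (\<sigma>, z0)) (\<rho>, z0) = act a (act b (basis (\<sigma>, z0))) (\<rho>, z0)"
      by (simp add: act_append)
    also have "\<dots> = act a (sm ?c (basis (\<sigma>, z0))) (\<rho>, z0)" by (rule act_row[where g="act b (basis (\<sigma>, z0))" and g'="sm ?c (basis (\<sigma>, z0))", OF r])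
    also have "\<dots> = ?c * act a (basis (\<sigma>, z0)) (\<rho>, z0)" by (simp add: act_sm)
    also have "\<dots> = ?c * (if \<rho> = \<sigma> then act a (basis (\<sigma>, z0)) (\<sigma>, z0) else 0)"
      by (subst diag[OF that(1)]) simp
    finally show ?thesis .
  qed
  show ?thesis using key[OF assms] key[OF assms(2,1)] by simp
qed

lemma okw_append: "okw n u \<Longrightarrow> okw n v \<Longrightarrow> okw n (u @ v)"
  by (auto simp: okw_def)

lemma faithful:
  assumes oku: "okw n u" and okv: "okw n v" and czu: "cz u" and czv: "cz v"
  shows "mon (u @ v) = mon (v @ u)"
proof (rule ccontr)
  assume neq: "mon (u @ v) \<noteq> mon (v @ u)"
  let ?Z = "mon (u @ v) - mon (v @ u)"
  let ?S = "wsupp (mon (u @ v)) \<union> wsupp (mon (v @ u))"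
  let ?sb = "\<lambda>\<gamma>::midx. \<Sum>j<n. snd \<gamma> j"
  have ok1: "okw n (u @ v)" and ok2: "okw n (v @ u)" using oku okv by (auto simp: okw_append)
  have finS: "finite ?S" using finite_mon[OF ok1] finite_mon[OF ok2] by simp
  have mdS: "modes n \<gamma>" if "\<gamma> \<in> ?S" for \<gamma>
    using that mon_modes[OF ok1, of \<gamma>] mon_modes[OF ok2, of \<gamma>] by (auto simp: wsupp_def)
  have ZS: "?Z \<gamma> \<noteq> 0 \<Longrightarrow> \<gamma> \<in> ?S" for \<gamma> by (auto simp: wsupp_def)
  from neq obtain \<gamma>1 where "?Z \<gamma>1 \<noteq> 0" by (auto simp: fun_eq_iff)
  from ex_has_least_nat[of "\<lambda>\<gamma>. ?Z \<gamma> \<noteq> 0", OF this, of ?sb] obtain \<gamma>0 where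
    z0nz: "?Z \<gamma>0 \<noteq> 0" and least: "\<And>\<gamma>. ?Z \<gamma> \<noteq> 0 \<Longrightarrow> ?sb \<gamma>0 \<le> ?sb \<gamma>" by blast
  obtain \<alpha>0 \<beta>0 where g0: "\<gamma>0 = (\<alpha>0, \<beta>0)" by (cases \<gamma>0)
  have g0S: "\<gamma>0 \<in> ?S" using ZS[OF z0nz] .
  have md0: "modes n \<gamma>0" using mdS[OF g0S] .
  let ?h = "basis (\<beta>0, z0)"
  have finh: "finite (wsupp ?h)" and mdh: "\<And>\<delta>. \<delta> \<in> wsupp ?h \<Longrightarrow> modes n \<delta>"
  proof -
    have "wsupp ?h = {(\<beta>0, z0)}" by (auto simp: wsupp_def basis_apply)
    thus "finite (wsupp ?h)" by simp
    fix \<delta> assume "\<delta> \<in> wsupp ?h"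
    hence "\<delta> = (\<beta>0, z0)" by (auto simp: wsupp_def basis_apply split: if_splits)
    thus "modes n \<delta>" using md0 g0 by (auto simp: modes_def)
  qed
  have A1: "(\<Sum>\<gamma>\<in>?S. sm (mon (u @ v) \<gamma>) (act (word n \<gamma>) ?h)) = act (u @ v) ?h"
    by (rule L1S[OF ok1 finh mdh finS]) auto
  have A2: "(\<Sum>\<gamma>\<in>?S. sm (mon (v @ u) \<gamma>) (act (word n \<gamma>) ?h)) = act (v @ u) ?h"
    by (rule L1S[OF ok2 finh mdh finS]) auto
  have "(\<Sum>\<gamma>\<in>?S. ?Z \<gamma> * act (word n \<gamma>) ?h (\<alpha>0, z0))
      = act (u @ v) ?h (\<alpha>0, z0) - act (v @ u) ?h (\<alpha>0, z0)"
  proof -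
    have "(\<Sum>\<gamma>\<in>?S. ?Z \<gamma> * act (word n \<gamma>) ?h (\<alpha>0, z0))
        = (\<Sum>\<gamma>\<in>?S. mon (u @ v) \<gamma> * act (word n \<gamma>) ?h (\<alpha>0, z0))
          - (\<Sum>\<gamma>\<in>?S. mon (v @ u) \<gamma> * act (word n \<gamma>) ?h (\<alpha>0, z0))"
      by (simp add: left_diff_distrib sum_subtractf)
    thus ?thesis using fun_cong[OF A1, of "(\<alpha>0, z0)"] fun_cong[OF A2, of "(\<alpha>0, z0)"]
      by (simp add: sum_fun_apply)
  qed
  also have "\<dots> = 0" using comm_diag[OF czu czv] by simp
  finally have sum0: "(\<Sum>\<gamma>\<in>?S. ?Z \<gamma> * act (word n \<gamma>) ?h (\<alpha>0, z0)) = 0" .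
  have others: "?Z \<gamma> * act (word n \<gamma>) ?h (\<alpha>0, z0) = 0" if gS: "\<gamma> \<in> ?S" and gne: "\<gamma> \<noteq> \<gamma>0" for \<gamma>
  proof (rule ccontr)
    assume "\<not> ?thesis"
    hence zg: "?Z \<gamma> \<noteq> 0" and ag: "act (word n \<gamma>) ?h (\<alpha>0, z0) \<noteq> 0" by auto
    obtain a b where g: "\<gamma> = (a, b)" by (cases \<gamma>)
    have mdg: "modes n \<gamma>" using mdS[OF gS] .
    from ag word_row[OF mdg] have le: "\<forall>j. a j \<le> \<alpha>0 j" and eq: "(\<lambda>j. \<alpha>0 j - a j + b j) = \<beta>0"
      by (auto simp: g)
    have "?sb \<gamma>0 = (\<Sum>j<n. (\<alpha>0 j - a j) + b j)" by (simp add: g0 eq[symmetric])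
    also have "\<dots> = (\<Sum>j<n. \<alpha>0 j - a j) + ?sb \<gamma>" by (simp add: sum.distrib g)
    finally have "(\<Sum>j<n. \<alpha>0 j - a j) = 0" using least[OF zg] by simp
    hence "\<forall>j<n. \<alpha>0 j - a j = 0" by simp
    hence "a j = \<alpha>0 j" for j
      using le mdg md0 by (cases "j < n") (auto simp: modes_def g g0 intro: le_antisym)
    hence "a = \<alpha>0" by auto
    with eq have "b = \<beta>0" by (auto simp: fun_eq_iff)
    with \<open>a = \<alpha>0\<close> gne show False by (simp add: g g0)
  qed
  have "(\<Sum>\<gamma>\<in>?S. ?Z \<gamma> * act (word n \<gamma>) ?h (\<alpha>0, z0)) = ?Z \<gamma>0 * act (word n \<gamma>0) ?h (\<alpha>0, z0)"
  proof -
    have "(\<Sum>\<gamma>\<in>?S. ?Z \<gamma> * act (word n \<gamma>) ?h (\<alpha>0, z0))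
        = ?Z \<gamma>0 * act (word n \<gamma>0) ?h (\<alpha>0, z0) + (\<Sum>\<gamma>\<in>?S - {\<gamma>0}. ?Z \<gamma> * act (word n \<gamma>) ?h (\<alpha>0, z0))"
      by (rule sum.remove[OF finS g0S])
    also have "(\<Sum>\<gamma>\<in>?S - {\<gamma>0}. ?Z \<gamma> * act (word n \<gamma>) ?h (\<alpha>0, z0)) = 0"
      by (rule sum.neutral) (use others in auto)
    finally show ?thesis by simp
  qed
  moreover have "act (word n \<gamma>0) ?h (\<alpha>0, z0) \<noteq> 0"
    using word_row[OF md0, of \<beta>0 \<alpha>0] by (simp add: g0)
  ultimately show False using sum0 z0nz by simp
qed



lemma wdeg_eq:
  assumes fin: "finite (wsupp f)" and nz: "f \<gamma>0 \<noteq> 0" and le: "\<And>\<gamma>. f \<gamma> \<noteq> 0 \<Longrightarrow> mlen n \<gamma> \<le> mlen n \<gamma>0"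
  shows "wdeg n f = ereal (real (mlen n \<gamma>0))"
proof -
  have f0: "f \<noteq> 0" using nz by auto
  have eq: "{mlen n \<gamma> | \<gamma>. f \<gamma> \<noteq> 0} = mlen n ` wsupp f" by (auto simp: wsupp_def)
  have "Max {mlen n \<gamma> | \<gamma>. f \<gamma> \<noteq> 0} = mlen n \<gamma>0"
    unfolding eq by (rule Max_eqI) (use fin le nz in \<open>auto simp: wsupp_def\<close>)
  thus ?thesis using f0 by (simp add: wdeg_def)
qed

lemma wdeg_lt:
  assumes fin: "finite (wsupp f)" and le: "\<And>\<gamma>. f \<gamma> \<noteq> 0 \<Longrightarrow> mlen n \<gamma> + 4 \<le> e"
  shows "wdeg n f < ereal (real e - 2)"
proof (cases "f = 0")
  case True thus ?thesis by (simp add: wdeg_def)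
next
  case False
  then obtain \<gamma>1 where g1: "f \<gamma>1 \<noteq> 0" by (auto simp: fun_eq_iff)
  have eq: "{mlen n \<gamma> | \<gamma>. f \<gamma> \<noteq> 0} = mlen n ` wsupp f" by (auto simp: wsupp_def)
  have "\<gamma>1 \<in> wsupp f" using g1 by (simp add: wsupp_def)
  hence ne: "mlen n ` wsupp f \<noteq> {}" by blast
  have all: "\<forall>x\<in>mlen n ` wsupp f. x + 4 \<le> e" using le by (auto simp: wsupp_def)
  have "Max {mlen n \<gamma> | \<gamma>. f \<gamma> \<noteq> 0} + 4 \<le> e"
    unfolding eq using fin ne all by (metis Max_in finite_imageI)
  hence "real (Max {mlen n \<gamma> | \<gamma>. f \<gamma> \<noteq> 0}) < real e - 2" by linarith
  thus ?thesis using False by (simp add: wdeg_def)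
qed

definition lin :: "complex \<Rightarrow> gen list \<Rightarrow> complex \<Rightarrow> gen list \<Rightarrow> weyl" where
  "lin c1 v1 c2 v2 = (\<lambda>\<gamma>. c1 * mon v1 \<gamma> + c2 * mon v2 \<gamma>)"

lemma lin_supp: "wsupp (lin c1 v1 c2 v2) \<subseteq> wsupp (mon v1) \<union> wsupp (mon v2)"
  by (auto simp: wsupp_def lin_def)

lemma lin_fin: "okw n v1 \<Longrightarrow> okw n v2 \<Longrightarrow> finite (wsupp (lin c1 v1 c2 v2))"
  using lin_supp finite_mon by (meson finite_Un finite_subset)

lemma lin_modes: "okw n v1 \<Longrightarrow> okw n v2 \<Longrightarrow> \<delta> \<in> wsupp (lin c1 v1 c2 v2) \<Longrightarrow> modes n \<delta>"
  using lin_supp mon_modes by (fastforce simp: wsupp_def)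

lemma act_lin: "act u (lin c1 v1 c2 v2) = lin c1 (u @ v1) c2 (u @ v2)"
proof -
  have "lin c1 v1 c2 v2 = sm c1 (mon v1) + sm c2 (mon v2)" by (auto simp: lin_def fun_eq_iff)
  hence "act u (lin c1 v1 c2 v2) = sm c1 (act u (mon v1)) + sm c2 (act u (mon v2))"
    by (simp add: act_add act_sm)
  thus ?thesis by (auto simp: lin_def fun_eq_iff mon_def act_append)
qed

lemma wmul_lin:
  assumes ok1: "okw n v1" and ok2: "okw n v2" and fin: "finite (wsupp g)" and md: "\<And>\<delta>. \<delta> \<in> wsupp g \<Longrightarrow> modes n \<delta>"
  shows "wmul n (lin c1 v1 c2 v2) g = (\<lambda>\<delta>. c1 * act v1 g \<delta> + c2 * act v2 g \<delta>)"
proof -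
  let ?S = "wsupp (mon v1) \<union> wsupp (mon v2)"
  have finS: "finite ?S" using finite_mon[OF ok1] finite_mon[OF ok2] by simp
  have w: "wmul n (lin c1 v1 c2 v2) g = (\<Sum>\<gamma>\<in>?S. sm (lin c1 v1 c2 v2 \<gamma>) (act (word n \<gamma>) g))"
    by (rule wmul_eq[OF finS lin_supp])
  have A1: "(\<Sum>\<gamma>\<in>?S. sm (mon v1 \<gamma>) (act (word n \<gamma>) g)) = act v1 g"
    by (rule L1S[OF ok1 fin md finS]) auto
  have A2: "(\<Sum>\<gamma>\<in>?S. sm (mon v2 \<gamma>) (act (word n \<gamma>) g)) = act v2 g"
    by (rule L1S[OF ok2 fin md finS]) auto
  show ?thesis
  proof (rule ext)
    fix \<delta>
    have "wmul n (lin c1 v1 c2 v2) g \<delta>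
        = c1 * (\<Sum>\<gamma>\<in>?S. mon v1 \<gamma> * act (word n \<gamma>) g \<delta>) + c2 * (\<Sum>\<gamma>\<in>?S. mon v2 \<gamma> * act (word n \<gamma>) g \<delta>)"
      unfolding w by (simp add: sum_fun_apply lin_def sum_distrib_left sum.distrib[symmetric] algebra_simps)
    also have "\<dots> = c1 * act v1 g \<delta> + c2 * act v2 g \<delta>"
      using fun_cong[OF A1, of \<delta>] fun_cong[OF A2, of \<delta>] by (simp add: sum_fun_apply)
    finally show "wmul n (lin c1 v1 c2 v2) g \<delta> = c1 * act v1 g \<delta> + c2 * act v2 g \<delta>" .
  qed
qed

lemma count_gdag: "count_list (rev (map gdag w)) (Cre j) = count_list w (Ann j)"
  "count_list (rev (map gdag w)) (Ann j) = count_list w (Cre j)"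
proof -
  have "gdag x = Cre j \<longleftrightarrow> x = Ann j" "gdag x = Ann j \<longleftrightarrow> x = Cre j" for x by (cases x; auto)+
  thus "count_list (rev (map gdag w)) (Cre j) = count_list w (Ann j)"
    "count_list (rev (map gdag w)) (Ann j) = count_list w (Cre j)"
    by (induction w) auto
qed

lemma okw_adj: "okw n w \<Longrightarrow> okw n (rev (map gdag w))"
proof -
  have "gidx (gdag x) = gidx x" for x by (cases x) auto
  thus "okw n w \<Longrightarrow> okw n (rev (map gdag w))" by (auto simp: okw_def)
qed



theorem lemma8:
  fixes n :: nat and w :: "gen list" and \<alpha> \<beta> :: "nat \<Rightarrow> nat"
  assumes "n \<ge> 1"
    and "\<forall>x\<in>set w. gidx x < n"
    and "mdeg w = (\<alpha>, \<beta>)"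
  shows "(wmul n (g_plus w) (g_minus w) = wmul n (g_minus w) (g_plus w) \<longleftrightarrow> \<alpha> = \<beta>)
    \<and> (wmul n (g_plus w) (g_minus w) \<noteq> wmul n (g_minus w) (g_plus w) \<longrightarrow>
         wdeg n (comm n (g_plus w) (g_minus w))
           = wdeg n (g_plus w) + wdeg n (g_minus w) - 2
       \<and> wdeg n (comm n (g_plus w) (g_minus w)
             + (\<Sum>k<n. (\<lambda>\<gamma>. 2 * \<i> * (of_nat ((\<alpha> k)\<^sup>2) - of_nat ((\<beta> k)\<^sup>2))
                   * basis (\<lambda>j. \<alpha> j + \<beta> j - (if j = k then 1 else 0),
                            \<lambda>j. \<alpha> j + \<beta> j - (if j = k then 1 else 0)) \<gamma>)))
           < wdeg n (g_plus w) + wdeg n (g_minus w) - 2)"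
proof -
  define w' where "w' = rev (map gdag w)"
  have ok: "okw n w" using assms(2) by (simp add: okw_def)
  have ok': "okw n w'" using okw_adj[OF ok] by (simp add: w'_def)
  have ok1: "okw n (w @ w')" and ok2: "okw n (w' @ w)" using ok ok' by (auto simp: okw_append)
  have cf: "(\<lambda>j. count_list w (Cre j)) = \<alpha>" "(\<lambda>j. count_list w (Ann j)) = \<beta>"
    using assms(3) by (simp_all add: mdeg_def)
  have cC: "count_list w (Cre j) = \<alpha> j" and cA: "count_list w (Ann j) = \<beta> j" for j
    using cf by (auto dest: fun_cong)
  have c'C: "count_list w' (Cre j) = \<beta> j" and c'A: "count_list w' (Ann j) = \<alpha> j" for j
    using count_gdag[of w j] cC cA by (simp_all add: w'_def)
  define L where "L = length w"
  have lw': "length w' = L" by (simp add: w'_def L_def)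
  have mlL: "mlen n (\<alpha>, \<beta>) = L" using mlen_mdeg[OF ok] assms(3) by (simp add: L_def)
  have mdw': "mdeg w' = (\<beta>, \<alpha>)" unfolding mdeg_def using c'C c'A by auto
  have mdab: "modes n (\<alpha>, \<beta>)" using mdeg_modes[OF ok] assms(3) by simp
  have gp: "g_plus w = lin \<i> w' \<i> w"
    by (auto simp: g_plus_def lin_def mon_adj_def w'_def fun_eq_iff algebra_simps)
  have gm: "g_minus w = lin 1 w' (-1) w"
    by (auto simp: g_minus_def lin_def mon_adj_def w'_def fun_eq_iff)
  have P1: "wmul n (g_plus w) (g_minus w) = (\<lambda>\<delta>. \<i> * (mon (w' @ w') \<delta> - mon (w' @ w) \<delta>) + \<i> * (mon (w @ w') \<delta> - mon (w @ w) \<delta>))"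
  proof -
    have "wmul n (lin \<i> w' \<i> w) (lin 1 w' (-1) w) = (\<lambda>\<delta>. \<i> * act w' (lin 1 w' (-1) w) \<delta> + \<i> * act w (lin 1 w' (-1) w) \<delta>)"
      by (rule wmul_lin[OF ok' ok lin_fin[OF ok' ok] lin_modes[OF ok' ok]])
    thus ?thesis unfolding gp gm act_lin by (simp add: lin_def fun_eq_iff)
  qed
  have P2: "wmul n (g_minus w) (g_plus w) = (\<lambda>\<delta>. (\<i> * mon (w' @ w') \<delta> + \<i> * mon (w' @ w) \<delta>) - (\<i> * mon (w @ w') \<delta> + \<i> * mon (w @ w) \<delta>))"
  proof -
    have "wmul n (lin 1 w' (-1) w) (lin \<i> w' \<i> w) = (\<lambda>\<delta>. 1 * act w' (lin \<i> w' \<i> w) \<delta> + (-1) * act w (lin \<i> w' \<i> w) \<delta>)"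
      by (rule wmul_lin[OF ok' ok lin_fin[OF ok' ok] lin_modes[OF ok' ok]])
    thus ?thesis unfolding gp gm act_lin by (simp add: lin_def fun_eq_iff)
  qed
  define Z where "Z = mon (w @ w') - mon (w' @ w)"
  have CM: "comm n (g_plus w) (g_minus w) = (\<lambda>\<delta>. 2 * \<i> * Z \<delta>)"
    unfolding comm_def P1 P2 Z_def by (auto simp: fun_eq_iff algebra_simps)
  have EQ: "wmul n (g_plus w) (g_minus w) = wmul n (g_minus w) (g_plus w) \<longleftrightarrow> Z = 0"
  proof -
    have "wmul n (g_plus w) (g_minus w) = wmul n (g_minus w) (g_plus w) \<longleftrightarrow> comm n (g_plus w) (g_minus w) = 0"
      by (simp add: comm_def)
    also have "\<dots> \<longleftrightarrow> Z = 0" unfolding CM by (auto simp: fun_eq_iff)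
    finally show ?thesis .
  qed
  define E where "E k = (\<lambda>j. \<alpha> j + \<beta> j - (if j = k then 1 else 0), \<lambda>j. \<alpha> j + \<beta> j - (if j = k then 1 else 0))" for k
  define c where "c k = (of_nat (\<beta> k) * of_nat (\<beta> k) - of_nat (\<alpha> k) * of_nat (\<alpha> k) :: complex)" for k
  define T where "T = TT w w'"
  have DE: "Dk (fst (mdeg (w @ w'))) (snd (mdeg (w @ w'))) k = E k" for k
    by (simp add: Dk_def E_def mdeg_def cC cA c'C c'A add.commute)
  have Tf: "T = (\<Sum>k<n. sm (c k) (basis (E k)))"
    unfolding T_def TT_formula[OF ok, of w'] DE by (simp add: cC cA c'C c'A c_def)
  have Tapp: "T \<gamma> = (\<Sum>k<n. c k * basis (E k) \<gamma>)" for \<gamma>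
    by (simp add: Tf sum_fun_apply)
  have ZTb: "(Z - T) \<gamma> \<noteq> 0 \<Longrightarrow> mlen n \<gamma> + 4 \<le> 2 * L" for \<gamma>
    using ZT[OF ok ok', of \<gamma>] lw' by (simp add: Z_def T_def L_def)
  have sumA: "(\<Sum>j<n. \<alpha> j + \<beta> j) = L" using mlL by (simp add: mlen_def sum.distrib)
  have mlE: "mlen n (E k) + 2 = 2 * L" if kn: "k < n" and pos: "\<alpha> k + \<beta> k \<ge> 1" for k
  proof -
    let ?A = "\<lambda>j. \<alpha> j + \<beta> j"
    have Ek: "E k = (?A(k := ?A k - 1), ?A(k := ?A k - 1))" by (auto simp: E_def fun_eq_iff)
    have AA: "mlen n (?A, ?A) = 2 * L" using sumA by (simp add: mlen_def)
    have 1: "mlen n (?A(k := ?A k - 1), ?A(k := ?A k - 1)) + ?A k = mlen n (?A, ?A(k := ?A k - 1)) + (?A k - 1)"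
      using mlen_upd1[of n ?A k "?A k - 1" "?A(k := ?A k - 1)"] kn by simp
    have 2: "mlen n (?A, ?A(k := ?A k - 1)) + ?A k = mlen n (?A, ?A) + (?A k - 1)"
      using mlen_upd2[of n ?A ?A k "?A k - 1"] kn by simp
    show ?thesis using 1 2 AA pos by (simp add: Ek)
  qed
  have Ene: "E k \<noteq> E k'" if "\<alpha> k' + \<beta> k' \<ge> 1" "k' \<noteq> k" for k k'
  proof
    assume "E k = E k'"
    hence "fst (E k) k' = fst (E k') k'" by simp
    thus False using that by (simp add: E_def)
  qed
  have cnz: "c k \<noteq> 0 \<longleftrightarrow> \<alpha> k \<noteq> \<beta> k" for k
  proof -
    have "c k = of_nat (\<beta> k * \<beta> k) - of_nat (\<alpha> k * \<alpha> k)" by (simp add: c_def)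
    hence "c k = 0 \<longleftrightarrow> \<beta> k * \<beta> k = \<alpha> k * \<alpha> k" by (simp only: right_minus_eq of_nat_eq_iff)
    also have "\<dots> \<longleftrightarrow> \<beta> k = \<alpha> k" using power2_eq_iff_nonneg[of "\<beta> k" "\<alpha> k"] by (simp add: power2_eq_square)
    finally show ?thesis by auto
  qed
  show ?thesis
  proof (cases "\<alpha> = \<beta>")
    case True
    have "cz w" "cz w'" using True by (auto simp: cz_def cC cA c'C c'A)
    hence "Z = 0" using faithful[OF ok ok'] by (simp add: Z_def)
    with EQ True show ?thesis by simp
  next
    case False
    then obtain k0 where k0: "\<alpha> k0 \<noteq> \<beta> k0" by (auto simp: fun_eq_iff)
    have k0n: "k0 < n"
    proof (rule ccontr)
      assume "\<not> k0 < n"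
      thus False using mdab k0 by (auto simp: modes_def)
    qed
    have pos0: "\<alpha> k0 + \<beta> k0 \<ge> 1" using k0 by linarith
    have mE0: "mlen n (E k0) + 2 = 2 * L" by (rule mlE[OF k0n pos0])
    have posc: "\<alpha> k + \<beta> k \<ge> 1" if "c k \<noteq> 0" for k using that cnz by force
    have ZT0: "(Z - T) (E k0) = 0" using ZTb[of "E k0"] mE0 by linarith
    have T0: "T (E k0) = c k0"
    proof -
      have "T (E k0) = (\<Sum>k<n. if k = k0 then c k0 else 0)"
        unfolding Tapp
      proof (intro sum.cong refl)
        fix k assume "k \<in> {..<n}"
        show "c k * basis (E k) (E k0) = (if k = k0 then c k0 else 0)"
        proof (cases "k = k0")
          case False
          show ?thesis
          proof (cases "c k = 0")
            case False
            hence "E k0 \<noteq> E k" using Ene[OF posc[OF False]] \<open>k \<noteq> k0\<close> by blast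
            thus ?thesis using \<open>k \<noteq> k0\<close> by (simp add: basis_apply)
          qed (use \<open>k \<noteq> k0\<close> in simp)
        qed (simp add: basis_apply)
      qed
      also have "\<dots> = c k0" using k0n by simp
      finally show ?thesis .
    qed
    have Z0: "Z (E k0) = c k0" using ZT0 T0 by simp
    have c0: "c k0 \<noteq> 0" using cnz k0 by simp
    have comm0: "comm n (g_plus w) (g_minus w) (E k0) \<noteq> 0" using Z0 c0 by (simp add: CM)
    hence neqw: "wmul n (g_plus w) (g_minus w) \<noteq> wmul n (g_minus w) (g_plus w)"
      by (auto simp: comm_def)
    have top: "mon w (\<alpha>, \<beta>) = 1" using mon_top[OF ok] assms(3) by simp
    have top': "mon w' (\<alpha>, \<beta>) = 0"
    proof (rule ccontr)
      assume nz: "mon w' (\<alpha>, \<beta>) \<noteq> 0"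
      have "(\<alpha>, \<beta>) \<noteq> mdeg w'" using mdw' False by auto
      with nz mon_top[OF ok'] have "mlen n (\<alpha>, \<beta>) + 2 \<le> length w'" by blast
      thus False using mlL lw' by simp
    qed
    have lowm: "mlen n \<gamma> \<le> mlen n (\<alpha>, \<beta>)" if "mon w' \<gamma> \<noteq> 0 \<or> mon w \<gamma> \<noteq> 0" for \<gamma>
      using that mon_mlen[of w' \<gamma> n] mon_mlen[of w \<gamma> n] mlL lw' by (auto simp: L_def)
    have dp: "wdeg n (g_plus w) = ereal (real L)"
    proof -
      have "wdeg n (g_plus w) = ereal (real (mlen n (\<alpha>, \<beta>)))"
        unfolding gp
      proof (rule wdeg_eq[OF lin_fin[OF ok' ok]])
        show "lin \<i> w' \<i> w (\<alpha>, \<beta>) \<noteq> 0" using top top' by (simp add: lin_def)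
        show "mlen n \<gamma> \<le> mlen n (\<alpha>, \<beta>)" if "lin \<i> w' \<i> w \<gamma> \<noteq> 0" for \<gamma>
          using that by (intro lowm) (auto simp: lin_def)
      qed
      thus ?thesis using mlL by simp
    qed
    have dm: "wdeg n (g_minus w) = ereal (real L)"
    proof -
      have "wdeg n (g_minus w) = ereal (real (mlen n (\<alpha>, \<beta>)))"
        unfolding gm
      proof (rule wdeg_eq[OF lin_fin[OF ok' ok]])
        show "lin 1 w' (-1) w (\<alpha>, \<beta>) \<noteq> 0" using top top' by (simp add: lin_def)
        show "mlen n \<gamma> \<le> mlen n (\<alpha>, \<beta>)" if "lin 1 w' (-1) w \<gamma> \<noteq> 0" for \<gamma>
          using that by (intro lowm) (auto simp: lin_def)
      qed
      thus ?thesis using mlL by simp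
    qed
    have rhs: "wdeg n (g_plus w) + wdeg n (g_minus w) - 2 = ereal (real (2 * L) - 2)"
      by (simp add: dp dm)
    have finZ: "finite (wsupp Z)"
    proof -
      have "wsupp Z \<subseteq> wsupp (mon (w @ w')) \<union> wsupp (mon (w' @ w))" by (auto simp: wsupp_def Z_def)
      thus ?thesis using finite_mon[OF ok1] finite_mon[OF ok2] by (meson finite_Un finite_subset)
    qed
    have dc: "wdeg n (comm n (g_plus w) (g_minus w)) = ereal (real (mlen n (E k0)))"
    proof (rule wdeg_eq)
      show "comm n (g_plus w) (g_minus w) (E k0) \<noteq> 0" by (rule comm0)
      show "finite (wsupp (comm n (g_plus w) (g_minus w)))"
        using finZ by (rule finite_subset[rotated]) (auto simp: wsupp_def CM)
      show "mlen n \<gamma> \<le> mlen n (E k0)" if "comm n (g_plus w) (g_minus w) \<gamma> \<noteq> 0" for \<gamma>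
      proof -
        have "Z \<gamma> \<noteq> 0" using that by (simp add: CM)
        hence "(Z - T) \<gamma> \<noteq> 0 \<or> T \<gamma> \<noteq> 0" by auto
        thus ?thesis
        proof
          assume "(Z - T) \<gamma> \<noteq> 0"
          from ZTb[OF this] mE0 show ?thesis by linarith
        next
          assume "T \<gamma> \<noteq> 0"
          from sum_nz[OF this[unfolded Tapp]] obtain k where kn: "k < n" and tk: "c k * basis (E k) \<gamma> \<noteq> 0"
            by blast
          hence "\<gamma> = E k" "c k \<noteq> 0" by (auto simp: basis_apply split: if_splits)
          thus ?thesis using mlE[OF kn posc] mE0 by simp
        qed
      qed
    qed
    have lhs: "wdeg n (comm n (g_plus w) (g_minus w)) = ereal (real (2 * L) - 2)"
    proof -
      have h: "real (mlen n (E k0)) = real (2 * L) - 2" using mE0 by linarith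
      show ?thesis using dc h by simp
    qed
    let ?F = "comm n (g_plus w) (g_minus w)
             + (\<Sum>k<n. (\<lambda>\<gamma>. 2 * \<i> * (of_nat ((\<alpha> k)\<^sup>2) - of_nat ((\<beta> k)\<^sup>2))
                   * basis (\<lambda>j. \<alpha> j + \<beta> j - (if j = k then 1 else 0),
                            \<lambda>j. \<alpha> j + \<beta> j - (if j = k then 1 else 0)) \<gamma>))"
    have Fapp: "?F \<gamma> = 2 * \<i> * (Z - T) \<gamma>" for \<gamma>
    proof -
      have "?F \<gamma> = comm n (g_plus w) (g_minus w) \<gamma> + (\<Sum>k<n. 2 * \<i> * (of_nat ((\<alpha> k)\<^sup>2) - of_nat ((\<beta> k)\<^sup>2)) * basis (E k) \<gamma>)"
        by (simp only: plus_fun_apply sum_fun_apply E_def)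
      also have "(\<Sum>k<n. 2 * \<i> * (of_nat ((\<alpha> k)\<^sup>2) - of_nat ((\<beta> k)\<^sup>2)) * basis (E k) \<gamma>)
          = (\<Sum>k<n. (- 2 * \<i>) * (c k * basis (E k) \<gamma>))"
        by (intro sum.cong refl) (simp add: c_def power2_eq_square algebra_simps)
      also have "\<dots> = (- 2 * \<i>) * T \<gamma>" by (simp only: Tapp sum_distrib_left)
      finally show ?thesis by (simp add: CM algebra_simps)
    qed
    have Flow: "mlen n \<gamma> + 4 \<le> 2 * L" if "?F \<gamma> \<noteq> 0" for \<gamma>
    proof -
      have "(Z - T) \<gamma> \<noteq> 0" using that unfolding Fapp by simp
      thus ?thesis by (rule ZTb)
    qed
    have finF: "finite (wsupp ?F)"
    proof (rule finite_subset[OF _ finite_box[of n "2 * L"]])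
      show "wsupp ?F \<subseteq> {\<gamma>. modes n \<gamma> \<and> mlen n \<gamma> \<le> 2 * L}"
      proof
        fix \<gamma> assume "\<gamma> \<in> wsupp ?F"
        hence nzF: "?F \<gamma> \<noteq> 0" by (simp add: wsupp_def)
        hence nzZT: "(Z - T) \<gamma> \<noteq> 0" unfolding Fapp by simp
        have "modes n \<gamma>"
        proof (cases "Z \<gamma> = 0")
          case False
          hence "mon (w @ w') \<gamma> \<noteq> 0 \<or> mon (w' @ w) \<gamma> \<noteq> 0" by (auto simp: Z_def)
          thus ?thesis using mon_modes[OF ok1, of \<gamma>] mon_modes[OF ok2, of \<gamma>] by blast
        next
          case True
          hence "T \<gamma> \<noteq> 0" using nzZT by simp
          from sum_nz[OF this[unfolded Tapp]] obtain k where kn: "k < n" and tk: "c k * basis (E k) \<gamma> \<noteq> 0"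
            by blast
          hence "\<gamma> = E k" by (auto simp: basis_apply split: if_splits)
          thus ?thesis using mdab by (auto simp: modes_def E_def)
        qed
        thus "\<gamma> \<in> {\<gamma>. modes n \<gamma> \<and> mlen n \<gamma> \<le> 2 * L}" using Flow[OF nzF] by simp
      qed
    qed
    have "wdeg n ?F < ereal (real (2 * L) - 2)" by (rule wdeg_lt[OF finF Flow])
    with lhs rhs neqw False show ?thesis by simp
  qed
qed

end
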